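(* Let $\mathcal G$ be a constructor GRS over a finite signature $\mathcal F$ that is precedence terminating with argument separation (with precedence $\sqsubset$ and rank $\mathrm{rk}$ used in $\pi_\ell$), and let $d\in\mathbb N$ with $d\ge\max\big(\{\mathrm{ar}(f):f\in\mathcal F\}\cup\{|K{\restriction}r|:(K,l,r)\in\mathcal G_{\mathrm{fin}}\}\big)$. Suppose every rule $(K,l,r)\in\mathcal G_{\mathrm{inf}}$ satisfies: (i) $(K{\restriction}l)\cap\mathrm{nrm}$ is maximally shared; (ii) $K{\restriction}v$ is closed for every labeled node $v\in\mathrm{nrm}(l)$; (iii) $\big|\{v\in\mathrm{nrm}(l): v \text{ unlabeled}\}\cup\bigcup_{v\in\mathrm{safe}(l)}V_{K\restriction v}\big|\le d$; (iv) $|K{\restriction}r|\le|K{\restriction}l|+\big|\bigcup_{v\in\mathrm{nrm}(r)}V_{K\restriction v}\big|$. Then for every closed basic term graph $G_0\in\mathcal{TG}(\mathcal F)$ and all term graphs $G,H$ with $G_0\to^*_{\mathcal G}G\to_{\mathcal G}H$, and every integer $\ell$ with $2\big(\big|\bigcup_{v\in\mathrm{nrm}(\rho_{G_0})}V_{G_0\restriction v}\big|+d\big)\le\ell$, we have $\pi_\ell(H)<\pi_\ell(G)$.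
   Context: Term graphs. $\mathcal F=\mathcal C\cup\mathcal D$ is a finite signature (constructors and defined symbols, disjoint) with arity function $\mathrm{ar}$. A labeled graph consists of a finite acyclic directed graph $(V_G,E_G)$, a partial labeling $\mathrm{lab}_G:V_G\to\mathcal F$ and a successor function $\mathrm{att}_G:V_G\to V_G^*$ such that $\mathrm{att}_G(v)$ has length $\mathrm{ar}(\mathrm{lab}_G(v))$ if $v$ is labeled and is empty otherwise, and the set of entries of $\mathrm{att}_G(v)$ equals $\{u:(v,u)\in E_G\}$. Unlabeled nodes act as variables. A term graph additionally has a root $\rho_G$ from which every node is reachable; $\mathcal{TG}(\mathcal F)$ is the set of term graphs over $\mathcal F$, $\mathcal{TG}(\mathcal C)$ those whose labeled nodes carry constructors. $G{\restriction}v$ is the sub-term graph of nodes reachable from $v$, rooted at $v$; $H\subseteq G$ means $H=G{\restriction}v$ for some $v$. $|G|=|V_G|$; $\mathrm{depth}(G)$ is the length of a longest path from $\rho_G$. $G$ is closed if every node is labeled; basic if $\mathrm{lab}_G(\rho_G)\in\mathcal D$ and $G{\restriction}v\in\mathcal{TG}(\mathcal C)$ for every successor $v$ of $\rho_G$. Choosing an injective map from unlabeled nodes to variables, each $G{\restriction}v$ has a term representation $\mathrm{term}(G{\restriction}v)$; $G$ is maximally shared if $\mathrm{term}(G{\restriction}u)=\mathrm{term}(G{\restriction}v)$ implies $u=v$. Argument separation. The argument positions of each $f\in\mathcal F$ are split into normal and safe ones; constructors have only safe positions; nodes with the same label have the same separation. $\mathrm{nrm}(v)$ (resp. $\mathrm{safe}(v)$)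 is the set of successors of $v$ at normal (resp. safe) positions. $H\sqsubset_{\mathrm{nrm}}G$ means $H\subseteq G{\restriction}v$ for some $v\in\mathrm{nrm}(\rho_G)$. For a term graph $G$ with $\mathrm{att}_G(\rho_G)=v_1,\dots,v_k;v_{k+1},\dots,v_{k+l}$, $G\cap\mathrm{nrm}$ is the term graph with root $\rho_G$ whose nodes are $\rho_G$, the nodes of $G{\restriction}v$ for $v\in\mathrm{nrm}(\rho_G)$ (with their labels and successors from $G$), and $l$ fresh unlabeled nodes $u_1,\dots,u_l$, with $\mathrm{att}(\rho_G)=v_1,\dots,v_k;u_1,\dots,u_l$ (if no safe successor of the root is labeled, $G\cap\mathrm{nrm}=G$). Rewriting. Homomorphisms of labeled graphs preserve labels, successor sequences at labeled nodes (nothing required at unlabeled nodes) and the normal/safe split. A graph rewrite rule $(K,l,r)$ is a labeled graph $K$ with distinct nodes $l,r$ such that every unlabeled node of $K{\restriction}r$ lies in $K{\restriction}l$; it is a constructor rule if $K{\restriction}l$ is basic. A GRS is a (possibly infinite) set of rules; a constructor GRS consists of constructor rules. For a rule $(K,l,r)$ and homomorphism $\varphi:K{\restriction}l\to G$, the step $G\to_{\mathcal G}H$ is the standard build/redirection/garbage-collection step replacing $G{\restriction}\varphi(l)$ by an instance of $K{\restriction}r$ (new labeled nodes are fresh copies, unlabeled nodes are mapped via $\varphi$, edges into $\varphi(l)$ are redirected to the image of $r$, unreachable nodes removed). Since $\mathcal F$ is finite, $\mathcal D$ splits into $\mathcal D_{\mathrm{inf}}$ (symbols defined, i.e. labeling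 a left root, in infinitely many rules of $\mathcal G$) and $\mathcal D_{\mathrm{fin}}$ (the rest); $\mathcal G_{\mathrm{inf}}=\{(K,l,r)\in\mathcal G:\mathrm{lab}_K(l)\in\mathcal D_{\mathrm{inf}}\}$, $\mathcal G_{\mathrm{fin}}=\{(K,l,r)\in\mathcal G:\mathrm{lab}_K(l)\in\mathcal D_{\mathrm{fin}}\}$. Precedence termination with argument separation. A precedence $\sqsubset$ is a well-founded strict partial order on $\mathcal F$ with all constructors minimal, with a rank $\mathrm{rk}:\mathcal F\to\mathbb N$ such that $g\sqsubset f$ implies $\mathrm{rk}(g)<\mathrm{rk}(f)$. $H\sqsubset_{\mathrm{pt}}G$ holds if $\mathrm{lab}_H(v)\sqsubset\mathrm{lab}_G(\rho_G)$ for every labeled node $v$ of $H$ and either (1) $H=G{\restriction}u$ or $H\sqsubset_{\mathrm{pt}}G{\restriction}u$ for some successor $u$ of $\rho_G$; or (2) $\rho_H$ is labeled, $H{\restriction}v\sqsubset_{\mathrm{nrm}}G$ for each $v\in\mathrm{nrm}(\rho_H)$, and $H{\restriction}v\sqsubset_{\mathrm{pt}}G$ for each $v\in\mathrm{safe}(\rho_H)$. $\mathcal G$ is precedence terminating with argument separation if for some separation and precedence, $K{\restriction}r\sqsubset_{\mathrm{pt}}K{\restriction}l$ for every rule. Safe paths, $\mathcal{TG}_{\mathrm{nrm}}$ and interpretation. A path is safe if each next node is a safe successor of the previous; $\mathrm{SP}_G$ is the set of nodes on a safe path from $\rho_G$ (including $\rho_G$). $G\in\mathcal{TG}_{\mathrm{nrm}}(\mathcal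 F)$ iff $G\in\mathcal{TG}(\mathcal C)$, or $G{\restriction}v\in\mathcal{TG}(\mathcal C)$ for all $v\in\mathrm{nrm}(\rho_G)$ and $G{\restriction}v\in\mathcal{TG}_{\mathrm{nrm}}(\mathcal F)$ for all $v\in\mathrm{safe}(\rho_G)$. For positive $\ell$ and closed $G$ with labeled root, $\mathrm{pj}_\ell(G)=(1+\ell)^{2\,\mathrm{rk}(\mathrm{lab}_G(\rho_G))}\big(1+\sum_{u\in\mathrm{nrm}(\rho_G)}\mathrm{depth}(G{\restriction}u)\big)$, and for closed $G\in\mathcal{TG}_{\mathrm{nrm}}(\mathcal F)$, $\pi_\ell(G)=\sum\{\mathrm{pj}_\ell(G{\restriction}v):v\in\mathrm{SP}_G,\ G{\restriction}v\notin\mathcal{TG}(\mathcal C)\}$. *)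

theory Defs
  imports Main
begin

text \<open>Nodes are natural numbers (an infinite supply of fresh nodes).\<close>

record 'f lg =
  nodes :: "nat set"
  lab :: "nat \<Rightarrow> 'f option"
  att :: "nat \<Rightarrow> nat list"

type_synonym 'f tg = "'f lg \<times> nat"

definition edges :: "'f lg \<Rightarrow> (nat \<times> nat) set" where
  "edges G = {(v, u). v \<in> nodes G \<and> u \<in> set (att G v)}"

definition wf_lg :: "('f \<Rightarrow> nat) \<Rightarrow> 'f lg \<Rightarrow> bool" where
  "wf_lg ar G \<longleftrightarrow> finite (nodes G)
     \<and> (\<forall>v. v \<notin> nodes G \<longrightarrow> lab G v = None \<and> att G v = [])
     \<and> (\<forall>v\<in>nodes G. set (att G v) \<subseteq> nodes G
           \<and> length (att G v) = (case lab G v of None \<Rightarrow> 0 | Some f \<Rightarrow> ar f))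
     \<and> acyclic (edges G)"

definition reach :: "'f lg \<Rightarrow> nat \<Rightarrow> nat set" where
  "reach G v = {u. (v, u) \<in> (edges G)\<^sup>*}"

definition is_tg :: "('f \<Rightarrow> nat) \<Rightarrow> 'f tg \<Rightarrow> bool" where
  "is_tg ar T \<longleftrightarrow> wf_lg ar (fst T) \<and> snd T \<in> nodes (fst T) \<and> nodes (fst T) = reach (fst T) (snd T)"

definition restrict_lg :: "'f lg \<Rightarrow> nat set \<Rightarrow> 'f lg" where
  "restrict_lg G A = \<lparr>nodes = A, lab = (\<lambda>v. if v \<in> A then lab G v else None),
                      att = (\<lambda>v. if v \<in> A then att G v else [])\<rparr>"

definition sub :: "'f lg \<Rightarrow> nat \<Rightarrow> 'f tg" where
  "sub G v = (restrict_lg G (reach G v), v)"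

definition closed_tg :: "'f tg \<Rightarrow> bool" where
  "closed_tg T \<longleftrightarrow> (\<forall>v\<in>nodes (fst T). lab (fst T) v \<noteq> None)"

text \<open>\<open>T \<in> TG(C)\<close>: all labeled nodes carry constructors (Cs = set of constructors,
  the defined symbols are the remaining symbols).\<close>
definition constr_tg :: "'f set \<Rightarrow> 'f tg \<Rightarrow> bool" where
  "constr_tg Cs T \<longleftrightarrow> (\<forall>v\<in>nodes (fst T). \<forall>f. lab (fst T) v = Some f \<longrightarrow> f \<in> Cs)"

definition basic_tg :: "'f set \<Rightarrow> 'f tg \<Rightarrow> bool" where
  "basic_tg Cs T \<longleftrightarrow> (\<exists>f. lab (fst T) (snd T) = Some f \<and> f \<notin> Cs)
      \<and> (\<forall>v\<in>set (att (fst T) (snd T)). constr_tg Cs (sub (fst T) v))"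

text \<open>\<open>nn f\<close> is the number of normal argument positions of \<open>f\<close>; the normal positions
  are the first \<open>nn f\<close> ones, the remaining ones are safe.\<close>

definition nrm :: "('f \<Rightarrow> nat) \<Rightarrow> 'f lg \<Rightarrow> nat \<Rightarrow> nat set" where
  "nrm nn G v = (case lab G v of None \<Rightarrow> {} | Some f \<Rightarrow> set (take (nn f) (att G v)))"

definition safe :: "('f \<Rightarrow> nat) \<Rightarrow> 'f lg \<Rightarrow> nat \<Rightarrow> nat set" where
  "safe nn G v = (case lab G v of None \<Rightarrow> {} | Some f \<Rightarrow> set (drop (nn f) (att G v)))"

definition separation :: "('f \<Rightarrow> nat) \<Rightarrow> 'f set \<Rightarrow> ('f \<Rightarrow> nat) \<Rightarrow> bool" where
  "separation ar Cs nn \<longleftrightarrow> (\<forall>f. nn f \<le> ar f) \<and> (\<forall>c\<in>Cs. nn c = 0)"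

definition nrm_below :: "('f \<Rightarrow> nat) \<Rightarrow> 'f tg \<Rightarrow> 'f tg \<Rightarrow> bool" where
  "nrm_below nn H G \<longleftrightarrow> (\<exists>w\<in>nrm nn (fst G) (snd G).
      \<exists>x\<in>nodes (fst (sub (fst G) w)). H = sub (fst (sub (fst G) w)) x)"

text \<open>\<open>G \<inter> nrm\<close>: safe successors of the root replaced by fresh unlabeled nodes.\<close>
definition cap_nrm :: "('f \<Rightarrow> nat) \<Rightarrow> 'f tg \<Rightarrow> 'f tg" where
  "cap_nrm nn T =
    (let G = fst T; \<rho> = snd T; a = att G \<rho>;
         k = (case lab G \<rho> of None \<Rightarrow> 0 | Some f \<Rightarrow> nn f);
         sf = drop k a; m = Suc (Max (nodes G));
         us = map (\<lambda>i. m + i) [0..<length sf];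
         A = {\<rho>} \<union> \<Union> (reach G ` set (take k a)) \<union> set us
     in if (\<forall>v\<in>set sf. lab G v = None) then T
        else (\<lparr>nodes = A,
               lab = (\<lambda>v. if v \<in> A - set us then lab G v else None),
               att = (\<lambda>v. if v = \<rho> then take k a @ us
                          else if v \<in> A - set us then att G v else [])\<rparr>, \<rho>))"

datatype 'f trm = Var nat | Fn 'f "'f trm list"

text \<open>Term representation of \<open>G\<restriction>v\<close>; unlabeled nodes are mapped injectively to variables
  (the node itself serves as variable name).\<close>
inductive repr :: "'f lg \<Rightarrow> nat \<Rightarrow> 'f trm \<Rightarrow> bool" for G where
  "lab G v = None \<Longrightarrow> repr G v (Var v)"
| "lab G v = Some f \<Longrightarrow> list_all2 (repr G) (att G v) ts \<Longrightarrow> repr G v (Fn f ts)"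

definition max_shared :: "'f tg \<Rightarrow> bool" where
  "max_shared T \<longleftrightarrow> (\<forall>u\<in>nodes (fst T). \<forall>v\<in>nodes (fst T). \<forall>t.
      repr (fst T) u t \<and> repr (fst T) v t \<longrightarrow> u = v)"

definition precedence :: "'f set \<Rightarrow> ('f \<Rightarrow> 'f \<Rightarrow> bool) \<Rightarrow> ('f \<Rightarrow> nat) \<Rightarrow> bool" where
  "precedence Cs prec rk \<longleftrightarrow> wfP prec \<and> transp prec
      \<and> (\<forall>c\<in>Cs. \<forall>g. \<not> prec g c) \<and> (\<forall>f g. prec g f \<longrightarrow> rk g < rk f)"

definition lab_below :: "('f \<Rightarrow> 'f \<Rightarrow> bool) \<Rightarrow> 'f tg \<Rightarrow> 'f tg \<Rightarrow> bool" where
  "lab_below prec H G \<longleftrightarrow> (\<forall>v\<in>nodes (fst H). \<forall>g. lab (fst H) v = Some g \<longrightarrow>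
      (\<exists>f. lab (fst G) (snd G) = Some f \<and> prec g f))"

inductive pt :: "('f \<Rightarrow> nat) \<Rightarrow> ('f \<Rightarrow> 'f \<Rightarrow> bool) \<Rightarrow> 'f tg \<Rightarrow> 'f tg \<Rightarrow> bool"
  for nn prec where
  pt_sub: "lab_below prec H G \<Longrightarrow> u \<in> set (att (fst G) (snd G)) \<Longrightarrow>
     H = sub (fst G) u \<or> pt nn prec H (sub (fst G) u) \<Longrightarrow> pt nn prec H G"
| pt_fun: "lab_below prec H G \<Longrightarrow> lab (fst H) (snd H) \<noteq> None \<Longrightarrow>
     \<forall>v\<in>nrm nn (fst H) (snd H). nrm_below nn (sub (fst H) v) G \<Longrightarrow>
     \<forall>v\<in>safe nn (fst H) (snd H). pt nn prec (sub (fst H) v) G \<Longrightarrow> pt nn prec H G"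

type_synonym 'f rule = "'f lg \<times> nat \<times> nat"

definition is_rule :: "('f \<Rightarrow> nat) \<Rightarrow> 'f rule \<Rightarrow> bool" where
  "is_rule ar R \<longleftrightarrow> (case R of (K, l, r) \<Rightarrow>
      wf_lg ar K \<and> l \<in> nodes K \<and> r \<in> nodes K \<and> l \<noteq> r
      \<and> (\<forall>v\<in>nodes (fst (sub K r)). lab K v = None \<longrightarrow> v \<in> nodes (fst (sub K l))))"

definition constructor_rule :: "('f \<Rightarrow> nat) \<Rightarrow> 'f set \<Rightarrow> 'f rule \<Rightarrow> bool" where
  "constructor_rule ar Cs R \<longleftrightarrow> is_rule ar R \<and> (case R of (K, l, r) \<Rightarrow> basic_tg Cs (sub K l))"

text \<open>Homomorphism from a term graph into a labeled graph (normal/safe split is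
  preserved automatically as it is determined by the labels).\<close>
definition hom :: "'f tg \<Rightarrow> 'f lg \<Rightarrow> (nat \<Rightarrow> nat) \<Rightarrow> bool" where
  "hom L G \<phi> \<longleftrightarrow> (\<forall>v\<in>nodes (fst L). \<phi> v \<in> nodes G \<and>
      (lab (fst L) v \<noteq> None \<longrightarrow> lab G (\<phi> v) = lab (fst L) v \<and> att G (\<phi> v) = map \<phi> (att (fst L) v)))"

definition labeled_nodes :: "'f tg \<Rightarrow> nat set" where
  "labeled_nodes T = {v\<in>nodes (fst T). lab (fst T) v \<noteq> None}"

text \<open>Result of the rewrite step with rule (K,l,r), matching \<open>\<phi>\<close> and fresh-copy map \<open>c\<close>
  (build, redirection, garbage collection).\<close>
definition rewrite_result :: "'f tg \<Rightarrow> 'f lg \<Rightarrow> nat \<Rightarrow> nat \<Rightarrow> (nat \<Rightarrow> nat) \<Rightarrow> (nat \<Rightarrow> nat) \<Rightarrow> 'f tg" where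
  "rewrite_result G K l r \<phi> c =
    (let N = labeled_nodes (sub K r);
         \<psi> = (\<lambda>v. if v \<in> N then c v else \<phi> v);
         G1 = \<lparr>nodes = nodes (fst G) \<union> c ` N,
               lab = (\<lambda>w. if w \<in> c ` N then lab K (inv_into N c w) else lab (fst G) w),
               att = (\<lambda>w. if w \<in> c ` N then map \<psi> (att K (inv_into N c w)) else att (fst G) w)\<rparr>;
         red = (\<lambda>x. if x = \<phi> l then \<psi> r else x);
         G2 = G1\<lparr>att := (\<lambda>w. map red (att G1 w))\<rparr>
     in sub G2 (red (snd G)))"

definition rstep :: "('f \<Rightarrow> nat) \<Rightarrow> 'f rule set \<Rightarrow> 'f tg \<Rightarrow> 'f tg \<Rightarrow> bool" where
  "rstep ar Gs G H \<longleftrightarrow> is_tg ar G \<and> (\<exists>K l r \<phi> c. (K, l, r) \<in> Gs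
      \<and> hom (sub K l) (fst G) \<phi>
      \<and> inj_on c (labeled_nodes (sub K r))
      \<and> c ` labeled_nodes (sub K r) \<inter> nodes (fst G) = {}
      \<and> H = rewrite_result G K l r \<phi> c)"

definition D_inf :: "'f set \<Rightarrow> 'f rule set \<Rightarrow> 'f set" where
  "D_inf Cs Gs = {f. f \<notin> Cs \<and> infinite {(K, l, r)\<in>Gs. lab K l = Some f}}"

definition G_inf :: "'f set \<Rightarrow> 'f rule set \<Rightarrow> 'f rule set" where
  "G_inf Cs Gs = {(K, l, r)\<in>Gs. \<exists>f. lab K l = Some f \<and> f \<in> D_inf Cs Gs}"

definition G_fin :: "'f set \<Rightarrow> 'f rule set \<Rightarrow> 'f rule set" where
  "G_fin Cs Gs = {(K, l, r)\<in>Gs. \<exists>f. lab K l = Some f \<and> f \<notin> Cs \<and> f \<notin> D_inf Cs Gs}"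

definition depth :: "'f tg \<Rightarrow> nat" where
  "depth T = Max {n. \<exists>u. (snd T, u) \<in> (edges (fst T)) ^^ n}"

inductive tg_nrm :: "'f set \<Rightarrow> ('f \<Rightarrow> nat) \<Rightarrow> 'f tg \<Rightarrow> bool" for Cs nn where
  "constr_tg Cs T \<Longrightarrow> tg_nrm Cs nn T"
| "\<forall>v\<in>nrm nn (fst T) (snd T). constr_tg Cs (sub (fst T) v) \<Longrightarrow>
   \<forall>v\<in>safe nn (fst T) (snd T). tg_nrm Cs nn (sub (fst T) v) \<Longrightarrow> tg_nrm Cs nn T"

definition safe_edges :: "('f \<Rightarrow> nat) \<Rightarrow> 'f lg \<Rightarrow> (nat \<times> nat) set" where
  "safe_edges nn G = {(v, u). v \<in> nodes G \<and> u \<in> safe nn G v}"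

definition SP :: "('f \<Rightarrow> nat) \<Rightarrow> 'f tg \<Rightarrow> nat set" where
  "SP nn T = {v. (snd T, v) \<in> (safe_edges nn (fst T))\<^sup>*}"

definition pj :: "('f \<Rightarrow> nat) \<Rightarrow> ('f \<Rightarrow> nat) \<Rightarrow> nat \<Rightarrow> 'f tg \<Rightarrow> nat" where
  "pj rk nn ell T = (1 + ell) ^ (2 * rk (the (lab (fst T) (snd T))))
      * (1 + (\<Sum>u\<in>nrm nn (fst T) (snd T). depth (sub (fst T) u)))"

definition pi :: "'f set \<Rightarrow> ('f \<Rightarrow> nat) \<Rightarrow> ('f \<Rightarrow> nat) \<Rightarrow> nat \<Rightarrow> 'f tg \<Rightarrow> nat" where
  "pi Cs rk nn ell T = (\<Sum>v\<in>{v\<in>SP nn T. \<not> constr_tg Cs (sub (fst T) v)}. pj rk nn ell (sub (fst T) v))"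

end

theory Submission
  imports Defs
begin

definition clos :: "'f lg \<Rightarrow> bool" where
  "clos G \<longleftrightarrow> (\<forall>v\<in>nodes G. set (att G v) \<subseteq> nodes G)"

definition succ :: "'f lg \<Rightarrow> (nat \<times> nat) set" where
  "succ G = {(v, u). u \<in> set (att G v)}"

lemma edges_iff: "(v,u) \<in> edges G \<longleftrightarrow> v \<in> nodes G \<and> u \<in> set (att G v)"
  by (simp add: edges_def)

lemma edges_succ: "edges G \<subseteq> succ G"
  by (auto simp: edges_def succ_def)

lemma reach_refl[simp]: "x \<in> reach G x" by (simp add: reach_def)

lemma reach_trans: "y \<in> reach G x \<Longrightarrow> z \<in> reach G y \<Longrightarrow> z \<in> reach G x"
  by (simp add: reach_def)

lemma reach_child: "x \<in> nodes G \<Longrightarrow> u \<in> set (att G x) \<Longrightarrow> u \<in> reach G x"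
  by (auto simp: reach_def edges_def)

lemma reach_step: "y \<in> reach G x \<Longrightarrow> y \<in> nodes G \<Longrightarrow> u \<in> set (att G y) \<Longrightarrow> u \<in> reach G x"
  by (rule reach_trans, assumption, rule reach_child)

lemma wf_clos: "wf_lg ar G \<Longrightarrow> clos G"
  by (simp add: wf_lg_def clos_def)

lemma reach_subset_nodes:
  assumes "clos G" "x \<in> nodes G" shows "reach G x \<subseteq> nodes G"
proof
  fix z assume "z \<in> reach G x"
  then have "(x, z) \<in> (edges G)\<^sup>*" by (simp add: reach_def)
  then show "z \<in> nodes G"
    by (induct rule: rtrancl_induct) (use assms in \<open>auto simp: edges_def clos_def\<close>)
qed

lemma restrict_simps[simp]:
  "nodes (restrict_lg G A) = A"
  "lab (restrict_lg G A) v = (if v \<in> A then lab G v else None)"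
  "att (restrict_lg G A) v = (if v \<in> A then att G v else [])"
  by (simp_all add: restrict_lg_def)

lemma edges_restrict: "A \<subseteq> nodes G \<Longrightarrow> edges (restrict_lg G A) = {(v,u) \<in> edges G. v \<in> A}"
  by (auto simp: edges_def)

lemma reach_restrict:
  assumes "A \<subseteq> nodes G" "\<forall>v\<in>A. set (att G v) \<subseteq> A" "x \<in> A"
  shows "reach (restrict_lg G A) x = reach G x"
proof
  have e: "edges (restrict_lg G A) \<subseteq> edges G" using assms(1) by (auto simp: edges_def)
  show "reach (restrict_lg G A) x \<subseteq> reach G x"
    using rtrancl_mono[OF e] by (auto simp: reach_def)
  show "reach G x \<subseteq> reach (restrict_lg G A) x"
  proof
    fix z assume "z \<in> reach G x"
    then have "(x, z) \<in> (edges G)\<^sup>*" by (simp add: reach_def)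
    then have "z \<in> A \<and> (x, z) \<in> (edges (restrict_lg G A))\<^sup>*"
    proof (induct rule: rtrancl_induct)
      case base then show ?case using assms by simp
    next
      case (step y z)
      then have "z \<in> A" using assms(2) by (auto simp: edges_def)
      moreover have "(y, z) \<in> edges (restrict_lg G A)" using step by (auto simp: edges_def)
      ultimately show ?case using step by (meson rtrancl.rtrancl_into_rtrancl)
    qed
    then show "z \<in> reach (restrict_lg G A) x" by (simp add: reach_def)
  qed
qed

lemma reach_closed_att:
  assumes "clos G" "x \<in> nodes G" shows "\<forall>v\<in>reach G x. set (att G v) \<subseteq> reach G x"
proof (intro ballI subsetI)
  fix v u assume v: "v \<in> reach G x" and u: "u \<in> set (att G v)"
  have "v \<in> nodes G" using v reach_subset_nodes[OF assms] by blast
  then show "u \<in> reach G x" using reach_step[OF v _ u] by blast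
qed

lemma reach_restrict_reach:
  assumes "clos G" "y \<in> nodes G" "x \<in> reach G y"
  shows "reach (restrict_lg G (reach G y)) x = reach G x"
  using reach_restrict[OF reach_subset_nodes[OF assms(1,2)] reach_closed_att[OF assms(1,2)] assms(3)] .

lemma restrict_restrict: "B \<subseteq> A \<Longrightarrow> restrict_lg (restrict_lg G A) B = restrict_lg G B"
  by (auto simp: restrict_lg_def fun_eq_iff)

lemma reach_mono_sub: "y \<in> reach G x \<Longrightarrow> reach G y \<subseteq> reach G x"
  using reach_trans by blast

lemma sub_sub:
  assumes "clos G" "y \<in> nodes G" "x \<in> reach G y"
  shows "sub (fst (sub G y)) x = sub G x"
  using assms by (simp add: sub_def reach_restrict_reach restrict_restrict reach_mono_sub)

lemma sub_simps[simp]: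
  "snd (sub G y) = y"
  "nodes (fst (sub G y)) = reach G y"
  "lab (fst (sub G y)) v = (if v \<in> reach G y then lab G v else None)"
  "att (fst (sub G y)) v = (if v \<in> reach G y then att G v else [])"
  by (simp_all add: sub_def)

lemma clos_sub: "clos G \<Longrightarrow> y \<in> nodes G \<Longrightarrow> clos (fst (sub G y))"
  using reach_closed_att[of G y] by (simp add: clos_def)

lemma reach_sub: "clos G \<Longrightarrow> y \<in> nodes G \<Longrightarrow> x \<in> reach G y \<Longrightarrow> reach (fst (sub G y)) x = reach G x"
  by (simp add: sub_def reach_restrict_reach)

section \<open>Depth\<close>

lemma relpow_mono_set: "(R::(nat \<times> nat) set) \<subseteq> S \<Longrightarrow> (x,y) \<in> R ^^ n \<Longrightarrow> (x,y) \<in> S ^^ n"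
proof (induct n arbitrary: y)
  case 0 then show ?case by (metis relpow_0_E relpow_0_I)
next
  case (Suc n)
  from Suc.prems(2) obtain z where "(x,z) \<in> R ^^ n" "(z,y) \<in> R" by (rule relpow_Suc_E)
  then show ?case using Suc.hyps Suc.prems(1) by (meson relpow_Suc_I subsetD)
qed


lemma path_bound:
  assumes "finite V" "E \<subseteq> V \<times> V" "acyclic E" "(x,z) \<in> E ^^ n"
  shows "n \<le> card {y. (x,y) \<in> E\<^sup>+}"
  using assms(4)
proof (induct n arbitrary: x)
  case 0 then show ?case by simp
next
  case (Suc n)
  from Suc.prems obtain y where xy: "(x,y) \<in> E" and yz: "(y,z) \<in> E ^^ n" by (rule relpow_Suc_E2)
  have IH: "n \<le> card {w. (y,w) \<in> E\<^sup>+}" using Suc.hyps yz by blast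
  have fin: "finite {w. (x,w) \<in> E\<^sup>+}"
  proof (rule finite_subset[OF _ assms(1)])
    show "{w. (x,w) \<in> E\<^sup>+} \<subseteq> V" using trancl_subset_Sigma[OF assms(2)] by blast
  qed
  have "{w. (y,w) \<in> E\<^sup>+} \<subset> {w. (x,w) \<in> E\<^sup>+}"
  proof
    show "{w. (y,w) \<in> E\<^sup>+} \<subseteq> {w. (x,w) \<in> E\<^sup>+}" using xy by (auto intro: trancl_into_trancl2)
    have "(y,y) \<notin> E\<^sup>+" using assms(3) by (simp add: acyclic_def)
    moreover have "(x,y) \<in> E\<^sup>+" using xy by blast
    ultimately show "{w. (y,w) \<in> E\<^sup>+} \<noteq> {w. (x,w) \<in> E\<^sup>+}" by blast
  qed
  then have "card {w. (y,w) \<in> E\<^sup>+} < card {w. (x,w) \<in> E\<^sup>+}" by (rule psubset_card_mono[OF fin])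
  then show ?case using IH by simp
qed

lemma depth_le:
  assumes "\<And>n u. (snd T, u) \<in> (edges (fst T)) ^^ n \<Longrightarrow> n \<le> B"
  shows "depth T \<le> B"
proof -
  let ?S = "{n. \<exists>u. (snd T, u) \<in> (edges (fst T)) ^^ n}"
  have "?S \<subseteq> {..B}" using assms by auto
  then have fin: "finite ?S" using finite_subset by blast
  have ne: "?S \<noteq> {}" proof - have "0 \<in> ?S" by auto then show ?thesis by blast qed
  have "\<forall>n\<in>?S. n \<le> B" using assms by blast
  then show ?thesis unfolding depth_def using fin ne by (simp add: Max_le_iff)
qed

lemma depth_ge:
  assumes "finite (nodes (fst T))" "clos (fst T)" "acyclic (edges (fst T))"
    "(snd T, u) \<in> (edges (fst T)) ^^ n"
  shows "n \<le> depth T"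
proof -
  let ?S = "{n. \<exists>u. (snd T, u) \<in> (edges (fst T)) ^^ n}"
  have sub: "edges (fst T) \<subseteq> nodes (fst T) \<times> nodes (fst T)"
    using assms(2) by (auto simp: edges_def clos_def)
  have "\<forall>m\<in>?S. m \<le> card (nodes (fst T))"
  proof
    fix m assume "m \<in> ?S"
    then obtain w where w: "(snd T, w) \<in> (edges (fst T)) ^^ m" by blast
    have "m \<le> card {y. (snd T,y) \<in> (edges (fst T))\<^sup>+}"
      using path_bound[OF assms(1) sub assms(3) w] .
    also have "\<dots> \<le> card (nodes (fst T))"
      using trancl_subset_Sigma[OF sub] assms(1) by (intro card_mono) auto
    finally show "m \<le> card (nodes (fst T))" .
  qed
  then have "?S \<subseteq> {..card (nodes (fst T))}" by auto
  then have "finite ?S" using finite_subset by blast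
  then show ?thesis unfolding depth_def using assms(4) by (intro Max_ge) auto
qed

lemma path_in_sub:
  assumes "clos G" "x \<in> nodes G" "(x,u) \<in> (edges G) ^^ n"
  shows "(x,u) \<in> (edges (fst (sub G x))) ^^ n"
  using assms(3)
proof (induct n arbitrary: u)
  case 0 then show ?case by (metis relpow_0_E relpow_0_I)
next
  case (Suc n)
  from Suc.prems obtain y where xy: "(x,y) \<in> (edges G) ^^ n" and yu: "(y,u) \<in> edges G" by (rule relpow_Suc_E)
  have yr: "y \<in> reach G x" using relpow_imp_rtrancl[OF xy] by (simp add: reach_def)
  have "u \<in> set (att G y)" using yu by (simp add: edges_iff)
  then have "(y,u) \<in> edges (fst (sub G x))" using yr unfolding edges_iff by simp
  with Suc.hyps[OF xy] show ?case by (metis relpow_Suc_I)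
qed

lemma path_of_sub:
  assumes "(x,u) \<in> (edges (fst (sub G y))) ^^ n" "reach G y \<subseteq> nodes G"
  shows "(x,u) \<in> (edges G) ^^ n"
proof -
  have "edges (fst (sub G y)) \<subseteq> edges G" using assms(2) by (auto simp: edges_def sub_def)
  then show ?thesis using assms(1) relpow_mono_set by blast
qed


lemma reach_agree:
  assumes "clos G" "x \<in> nodes G"
    and ag: "\<forall>z\<in>reach G x. z \<in> nodes G' \<and> att G' z = att G z"
  shows "reach G' x = reach G x"
proof
  show "reach G x \<subseteq> reach G' x"
  proof
    fix z assume "z \<in> reach G x"
    then have "(x, z) \<in> (edges G)\<^sup>*" by (simp add: reach_def)
    then have "(x, z) \<in> (edges G')\<^sup>*"
    proof (induct rule: rtrancl_induct)
      case base then show ?case by simp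
    next
      case (step y z)
      have "y \<in> reach G x" using step(1) by (simp add: reach_def)
      then have yz: "(y, z) \<in> edges G'" using step(2) ag by (simp add: edges_iff)
      show ?case by (rule rtrancl_into_rtrancl[OF step(3) yz])
    qed
    then show "z \<in> reach G' x" by (simp add: reach_def)
  qed
  show "reach G' x \<subseteq> reach G x"
  proof
    fix z assume "z \<in> reach G' x"
    then have "(x, z) \<in> (edges G')\<^sup>*" by (simp add: reach_def)
    then show "z \<in> reach G x"
    proof (induct rule: rtrancl_induct)
      case base then show ?case by simp
    next
      case (step y z)
      have yn: "y \<in> nodes G" using step(3) reach_subset_nodes[OF assms(1,2)] by blast
      have "z \<in> set (att G y)" using step(2,3) ag by (simp add: edges_iff)
      then show ?case using reach_step[OF step(3) yn] by blast
    qed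
  qed
qed

lemma sub_agree:
  assumes "reach G' x = reach G x" "\<forall>z\<in>reach G x. lab G' z = lab G z \<and> att G' z = att G z"
  shows "sub G' x = sub G x"
  using assms by (auto simp: sub_def restrict_lg_def fun_eq_iff)

lemma list_all2_mono_set:
  assumes "list_all2 P xs ys" "\<And>x y. x \<in> set xs \<Longrightarrow> P x y \<Longrightarrow> Q x y"
  shows "list_all2 Q xs ys"
  using assms by (auto simp: list_all2_conv_all_nth)

lemma repr_transfer:
  assumes "repr G x t" "x \<in> A"
    "\<forall>z\<in>A. lab G' z = lab G z \<and> att G' z = att G z \<and> set (att G z) \<subseteq> A"
  shows "repr G' x t"
  using assms(1,2)
proof (induct rule: repr.induct)
  case (1 v) then show ?case using assms(3) by (auto intro: repr.intros)
next
  case (2 v f ts)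
  have "list_all2 (repr G') (att G v) ts"
    using 2(2) by (rule list_all2_mono_set) (use 2(3) assms(3) in blast)
  then show ?case using 2 assms(3) by (auto intro: repr.intros)
qed

definition morph :: "nat set \<Rightarrow> (nat \<Rightarrow> nat) \<Rightarrow> 'f lg \<Rightarrow> 'f lg \<Rightarrow> bool" where
  "morph S \<theta> G' G \<longleftrightarrow> (\<forall>x\<in>S. x \<in> nodes G' \<and> \<theta> x \<in> nodes G \<and> lab G' x = lab G (\<theta> x)
      \<and> att G (\<theta> x) = map \<theta> (att G' x) \<and> set (att G' x) \<subseteq> S)"

lemma morph_path:
  assumes "morph S \<theta> G' G" "x \<in> S" "(x, z) \<in> (edges G') ^^ n"
  shows "z \<in> S \<and> (\<theta> x, \<theta> z) \<in> (edges G) ^^ n"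
  using assms(3)
proof (induct n arbitrary: z)
  case 0 then show ?case using assms(2) by (metis relpow_0_E relpow_0_I)
next
  case (Suc n)
  from Suc.prems obtain y where xy: "(x,y) \<in> (edges G') ^^ n" and yz: "(y,z) \<in> edges G'" by (rule relpow_Suc_E)
  have IH: "y \<in> S" "(\<theta> x, \<theta> y) \<in> (edges G) ^^ n" using Suc.hyps[OF xy] by auto
  have zatt: "z \<in> set (att G' y)" using yz by (simp add: edges_iff)
  have m: "\<theta> y \<in> nodes G" "att G (\<theta> y) = map \<theta> (att G' y)" "set (att G' y) \<subseteq> S"
    using assms(1) IH(1) by (auto simp: morph_def)
  have "(\<theta> y, \<theta> z) \<in> edges G" using m zatt by (simp add: edges_iff)
  then have "(\<theta> x, \<theta> z) \<in> (edges G) ^^ Suc n" using IH(2) by (metis relpow_Suc_I)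
  then show ?case using m(3) zatt by blast
qed

lemma morph_reach:
  assumes "morph S \<theta> G' G" "x \<in> S" "z \<in> reach G' x"
  shows "z \<in> S \<and> \<theta> z \<in> reach G (\<theta> x)"
proof -
  have "\<exists>n. (x, z) \<in> (edges G') ^^ n" using assms(3) by (simp add: reach_def rtrancl_imp_relpow)
  then obtain n where "(x, z) \<in> (edges G') ^^ n" by blast
  then have "z \<in> S" "(\<theta> x, \<theta> z) \<in> (edges G) ^^ n" using morph_path[OF assms(1,2)] by auto
  then show ?thesis using relpow_imp_rtrancl by (auto simp: reach_def)
qed

lemma morph_repr:
  assumes "morph S \<theta> G' G" "repr G' x t" "x \<in> S" "\<forall>x\<in>S. lab G' x = None \<longrightarrow> \<theta> x = x"
  shows "repr G (\<theta> x) t"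
  using assms(2,3)
proof (induct rule: repr.induct)
  case (1 v)
  have "\<theta> v = v" "lab G (\<theta> v) = None" using 1 assms(1,4) by (auto simp: morph_def)
  then show ?case by (metis repr.intros(1))
next
  case (2 v f ts)
  have m: "lab G (\<theta> v) = Some f" "att G (\<theta> v) = map \<theta> (att G' v)" "set (att G' v) \<subseteq> S"
    using assms(1) 2 by (auto simp: morph_def)
  have "list_all2 (\<lambda>a b. repr G (\<theta> a) b) (att G' v) ts"
    using 2(2) by (rule list_all2_mono_set) (use m(3) in blast)
  then have "list_all2 (repr G) (att G (\<theta> v)) ts" using m(2) by (simp add: list_all2_map1)
  then show ?case using m(1) by (auto intro: repr.intros)
qed

lemma acyclic_sub: "acyclic (edges G) \<Longrightarrow> reach G y \<subseteq> nodes G \<Longrightarrow> acyclic (edges (fst (sub G y)))"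
  by (rule acyclic_subset) (auto simp: edges_def sub_def)

lemma morph_depth:
  assumes "morph S \<theta> G' G" "x \<in> S" "clos G'" "finite (nodes G)" "clos G" "acyclic (edges G)"
  shows "depth (sub G' x) \<le> depth (sub G (\<theta> x))"
proof (rule depth_le)
  fix n u assume "(snd (sub G' x), u) \<in> (edges (fst (sub G' x))) ^^ n"
  then have p: "(x, u) \<in> (edges (fst (sub G' x))) ^^ n" by simp
  have xn: "x \<in> nodes G'" using assms(1,2) by (auto simp: morph_def)
  have tn: "\<theta> x \<in> nodes G" using assms(1,2) by (auto simp: morph_def)
  have "(x, u) \<in> (edges G') ^^ n" using path_of_sub[OF p reach_subset_nodes[OF assms(3) xn]] .
  then have "(\<theta> x, \<theta> u) \<in> (edges G) ^^ n" using morph_path[OF assms(1,2)] by blast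
  then have p2: "(\<theta> x, \<theta> u) \<in> (edges (fst (sub G (\<theta> x)))) ^^ n" using path_in_sub[OF assms(5) tn] by blast
  show "n \<le> depth (sub G (\<theta> x))"
  proof (rule depth_ge)
    show "finite (nodes (fst (sub G (\<theta> x))))"
      using reach_subset_nodes[OF assms(5) tn] assms(4) by (simp add: finite_subset)
    show "clos (fst (sub G (\<theta> x)))" using clos_sub[OF assms(5) tn] .
    show "acyclic (edges (fst (sub G (\<theta> x))))" using acyclic_sub[OF assms(6) reach_subset_nodes[OF assms(5) tn]] .
    show "(snd (sub G (\<theta> x)), \<theta> u) \<in> (edges (fst (sub G (\<theta> x)))) ^^ n" using p2 by simp
  qed
qed

lemma depth_mono:
  assumes "finite (nodes G)" "clos G" "acyclic (edges G)" "x \<in> nodes G" "y \<in> reach G x"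
  shows "depth (sub G y) \<le> depth (sub G x)"
proof (rule depth_le)
  fix n u assume "(snd (sub G y), u) \<in> (edges (fst (sub G y))) ^^ n"
  then have p: "(y, u) \<in> (edges (fst (sub G y))) ^^ n" by simp
  have yn: "y \<in> nodes G" using assms(5) reach_subset_nodes[OF assms(2,4)] by blast
  have p1: "(y, u) \<in> (edges G) ^^ n" using path_of_sub[OF p reach_subset_nodes[OF assms(2) yn]] .
  have "\<exists>m. (x, y) \<in> (edges G) ^^ m" using assms(5) by (simp add: reach_def rtrancl_imp_relpow)
  then obtain m where "(x, y) \<in> (edges G) ^^ m" by blast
  then have "(x, u) \<in> (edges G) ^^ (m + n)" using p1 by (rule relpow_trans)
  then have p2: "(x, u) \<in> (edges (fst (sub G x))) ^^ (m + n)" using path_in_sub[OF assms(2,4)] by blast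
  have "m + n \<le> depth (sub G x)"
  proof (rule depth_ge)
    show "finite (nodes (fst (sub G x)))"
      using reach_subset_nodes[OF assms(2,4)] assms(1) by (simp add: finite_subset)
    show "clos (fst (sub G x))" using clos_sub[OF assms(2,4)] .
    show "acyclic (edges (fst (sub G x)))" using acyclic_sub[OF assms(3) reach_subset_nodes[OF assms(2,4)]] .
    show "(snd (sub G x), u) \<in> (edges (fst (sub G x))) ^^ (m + n)" using p2 by simp
  qed
  then show "n \<le> depth (sub G x)" by simp
qed

lemma repr_unique: "repr G x t \<Longrightarrow> repr G x t' \<Longrightarrow> t = t'"
proof (induct arbitrary: t' rule: repr.induct)
  case (1 v) then show ?case by (auto elim: repr.cases)
next
  case (2 v f ts)
  from 2(3) obtain ts' where l: "lab G v = Some f" and ts': "list_all2 (repr G) (att G v) ts'" "t' = Fn f ts'"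
    using 2(1) by (auto elim: repr.cases)
  have "ts = ts'"
    using 2(2) ts'(1)
    by (auto simp: list_all2_conv_all_nth intro!: nth_equalityI)
  then show ?case using ts' by simp
qed

lemma list_all2_exI:
  assumes "\<forall>x\<in>set xs. \<exists>t. P x t" shows "\<exists>ts. list_all2 P xs ts"
  using assms
proof (induct xs)
  case Nil then show ?case by auto
next
  case (Cons a xs)
  then obtain t ts where "P a t" "list_all2 P xs ts" by auto
  then show ?case by (intro exI[of _ "t # ts"]) auto
qed

lemma finite_edges: "finite (nodes G) \<Longrightarrow> clos G \<Longrightarrow> finite (edges G)"
  by (rule finite_subset[of _ "nodes G \<times> nodes G"]) (auto simp: edges_def clos_def)

lemma repr_exists:
  assumes "finite (nodes G)" "clos G" "acyclic (edges G)" "x \<in> nodes G"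
  shows "\<exists>t. repr G x t"
proof -
  have wf: "wf ((edges G)\<inverse>)" using finite_acyclic_wf_converse[OF finite_edges[OF assms(1,2)] assms(3)] .
  show ?thesis using assms(4)
  proof (induct x rule: wf_induct_rule[OF wf])
    case (1 x)
    show ?case
    proof (cases "lab G x")
      case None then show ?thesis by (auto intro: repr.intros)
    next
      case (Some f)
      have "\<forall>u\<in>set (att G x). \<exists>t. repr G u t"
      proof
        fix u assume u: "u \<in> set (att G x)"
        then have "(u, x) \<in> (edges G)\<inverse>" using 1(2) by (simp add: edges_iff)
        moreover have "u \<in> nodes G" using u 1(2) assms(2) by (auto simp: clos_def)
        ultimately show "\<exists>t. repr G u t" using 1(1) by blast
      qed
      then obtain ts where "list_all2 (repr G) (att G x) ts" using list_all2_exI by blast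
      then show ?thesis using Some by (auto intro: repr.intros)
    qed
  qed
qed

lemma reach_unfold:
  assumes "x \<in> nodes G"
  shows "reach G x = insert x (\<Union>u\<in>set (att G x). reach G u)"
proof
  show "reach G x \<subseteq> insert x (\<Union>u\<in>set (att G x). reach G u)"
  proof
    fix z assume "z \<in> reach G x"
    then have "(x, z) \<in> (edges G)\<^sup>*" by (simp add: reach_def)
    then show "z \<in> insert x (\<Union>u\<in>set (att G x). reach G u)"
    proof (cases rule: converse_rtranclE)
      case base then show ?thesis by simp
    next
      case (step u)
      then show ?thesis by (auto simp: edges_iff reach_def)
    qed
  qed
  show "insert x (\<Union>u\<in>set (att G x). reach G u) \<subseteq> reach G x"
  proof
    fix z assume "z \<in> insert x (\<Union>u\<in>set (att G x). reach G u)"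
    then show "z \<in> reach G x"
    proof
      assume "z = x" then show ?thesis by simp
    next
      assume "z \<in> (\<Union>u\<in>set (att G x). reach G u)"
      then obtain u where "u \<in> set (att G x)" "z \<in> reach G u" by blast
      then show ?thesis using reach_trans reach_child[OF assms] by blast
    qed
  qed
qed

lemma constr_sub_iff:
  "constr_tg Cs (sub G w) \<longleftrightarrow> (\<forall>z\<in>reach G w. \<forall>f. lab G z = Some f \<longrightarrow> f \<in> Cs)"
  by (auto simp: constr_tg_def)

lemma pj_sub:
  assumes "clos G" "x \<in> nodes G"
  shows "pj rk nn ell (sub G x) = (1 + ell) ^ (2 * rk (the (lab G x)))
      * (1 + (\<Sum>u\<in>nrm nn G x. depth (sub G u)))"
proof -
  have nr: "nrm nn (fst (sub G x)) x = nrm nn G x" by (simp add: nrm_def split: option.splits)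
  have "u \<in> nrm nn G x \<Longrightarrow> u \<in> reach G x" for u
    using reach_child[OF assms(2)] by (auto simp: nrm_def split: option.splits dest: in_set_takeD)
  then have "(\<Sum>u\<in>nrm nn G x. depth (sub (fst (sub G x)) u)) = (\<Sum>u\<in>nrm nn G x. depth (sub G u))"
    using sub_sub[OF assms] by (intro sum.cong) auto
  then show ?thesis by (simp add: pj_def nr)
qed


section \<open>Precedence termination: normal arguments of the right-hand side\<close>

definition NPs :: "('f \<Rightarrow> nat) \<Rightarrow> 'f lg \<Rightarrow> nat \<Rightarrow> nat set" where
  "NPs nn K g = (\<Union>y\<in>reach K g. \<Union>w\<in>nrm nn K y. reach K w)"

lemma NPs_intro: "y \<in> reach K g \<Longrightarrow> w \<in> nrm nn K y \<Longrightarrow> v \<in> reach K w \<Longrightarrow> v \<in> NPs nn K g"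
  by (auto simp: NPs_def)

lemma nrm_sub: "v \<in> reach K h \<Longrightarrow> nrm nn (fst (sub K h)) v = nrm nn K v"
  by (simp add: nrm_def split: option.splits)

lemma safe_sub: "v \<in> reach K h \<Longrightarrow> safe nn (fst (sub K h)) v = safe nn K v"
  by (simp add: safe_def split: option.splits)

lemma nrm_att: "nrm nn K v \<subseteq> set (att K v)"
  by (auto simp: nrm_def split: option.splits dest: in_set_takeD)

lemma safe_att: "safe nn K v \<subseteq> set (att K v)"
  by (auto simp: safe_def split: option.splits dest: in_set_dropD)

lemma att_nrm_safe: "lab K v \<noteq> None \<Longrightarrow> set (att K v) = nrm nn K v \<union> safe nn K v"
proof -
  assume "lab K v \<noteq> None"
  then obtain f where f: "lab K v = Some f" by auto
  have "set (att K v) = set (take (nn f) (att K v)) \<union> set (drop (nn f) (att K v))"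
    by (metis append_take_drop_id set_append)
  also have "\<dots> = nrm nn K v \<union> safe nn K v" by (simp add: nrm_def safe_def f)
  finally show ?thesis .
qed

lemma pt_lab_below: "pt nn prec H G \<Longrightarrow> lab_below prec H G"
  by (induct rule: pt.induct) auto

lemma pt_nrm:
  assumes "pt nn prec H G" "clos K"
  shows "\<And>h g. H = sub K h \<Longrightarrow> G = sub K g \<Longrightarrow> h \<in> nodes K \<Longrightarrow> g \<in> nodes K
     \<Longrightarrow> \<forall>x\<in>reach K h. nrm nn K x \<subseteq> NPs nn K g"
  using assms(1)
proof (induct rule: pt.induct)
  case (pt_sub H G u)
  note P = pt_sub.prems
  have ug: "u \<in> set (att K g)" using pt_sub.hyps(2) P(2) by simp
  then have ur: "u \<in> reach K g" using reach_child[OF P(4)] by blast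
  have un: "u \<in> nodes K" using ug P(4) assms(2) by (auto simp: clos_def)
  have su: "sub (fst G) u = sub K u" using P(2) sub_sub[OF assms(2) P(4) ur] by simp
  have NPmono: "NPs nn K u \<subseteq> NPs nn K g"
  proof
    fix x assume "x \<in> NPs nn K u"
    then obtain y w where "y \<in> reach K u" "w \<in> nrm nn K y" "x \<in> reach K w" by (auto simp: NPs_def)
    moreover have "y \<in> reach K g" using ur \<open>y \<in> reach K u\<close> reach_trans by blast
    ultimately show "x \<in> NPs nn K g" by (auto simp: NPs_def)
  qed
  from pt_sub.hyps(3) show ?case
  proof
    assume "H = sub (fst G) u"
    then have "h = u" using su P(1) by (metis sub_simps(1))
    show ?thesis
    proof
      fix x assume "x \<in> reach K h"
      then have xg: "x \<in> reach K g" using \<open>h = u\<close> ur reach_trans by blast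
      show "nrm nn K x \<subseteq> NPs nn K g"
        using xg by (blast intro: NPs_intro reach_refl)
    qed
  next
    assume "pt nn prec H (sub (fst G) u) \<and>
      (\<forall>h g. H = sub K h \<longrightarrow> sub (fst G) u = sub K g \<longrightarrow> h \<in> nodes K \<longrightarrow> g \<in> nodes K
        \<longrightarrow> (\<forall>x\<in>reach K h. nrm nn K x \<subseteq> NPs nn K g))"
    then show ?thesis using su un P(1,3) NPmono by blast
  qed
next
  case (pt_fun H G)
  note P = pt_fun.prems
  have Hh: "snd H = h" "fst H = fst (sub K h)" using P(1) by auto
  have Gg: "snd G = g" "fst G = fst (sub K g)" using P(2) by auto
  have hl: "lab K h \<noteq> None" using pt_fun.hyps(2) Hh by simp
  have nb: "\<exists>w\<in>nrm nn K g. v \<in> reach K w" if v: "v \<in> nrm nn K h" for v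
  proof -
    have vr: "v \<in> reach K h" using v nrm_att reach_child[OF P(3)] by blast
    have "nrm_below nn (sub (fst H) v) G" using pt_fun.hyps(3) v Hh nrm_sub[of h K h nn] by auto
    then obtain w x' where w: "w \<in> nrm nn (fst G) (snd G)"
      and x': "x' \<in> nodes (fst (sub (fst G) w))" and eq: "sub (fst H) v = sub (fst (sub (fst G) w)) x'"
      unfolding nrm_below_def by blast
    have wK: "w \<in> nrm nn K g" using w Gg nrm_sub[of g K g nn] by simp
    have wr: "w \<in> reach K g" using wK nrm_att reach_child[OF P(4)] by blast
    have wn: "w \<in> nodes K" using wr reach_subset_nodes[OF assms(2) P(4)] by blast
    have s1: "sub (fst G) w = sub K w" using Gg sub_sub[OF assms(2) P(4) wr] by (metis prod.collapse P(2))
    have x'r: "x' \<in> reach K w" using x' s1 by simp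
    have "snd (sub (fst H) v) = snd (sub (fst (sub (fst G) w)) x')" using eq by simp
    then have "v = x'" by simp
    then show ?thesis using wK x'r by blast
  qed
  show ?case
  proof
    fix x assume xr: "x \<in> reach K h"
    have cases: "x = h \<or> (\<exists>u\<in>set (att K h). x \<in> reach K u)" using xr reach_unfold[OF P(3)] by blast
    show "nrm nn K x \<subseteq> NPs nn K g"
    proof (cases "x = h")
      case True
      show ?thesis
      proof
        fix v assume "v \<in> nrm nn K x"
        then obtain w where "w \<in> nrm nn K g" "v \<in> reach K w" using nb True by blast
        then show "v \<in> NPs nn K g" by (blast intro: NPs_intro reach_refl)
      qed
    next
      case False
      then obtain u where u: "u \<in> set (att K h)" and xu: "x \<in> reach K u" using cases by blast
      have "u \<in> nrm nn K h \<or> u \<in> safe nn K h" using u att_nrm_safe[OF hl] by blast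
      then show ?thesis
      proof
        assume "u \<in> nrm nn K h"
        then obtain w where w: "w \<in> nrm nn K g" "u \<in> reach K w" using nb by blast
        have wr: "w \<in> reach K g" using w(1) nrm_att reach_child[OF P(4)] by blast
        have "x \<in> reach K g" using xu w(2) wr reach_trans by blast
        then show ?thesis by (blast intro: NPs_intro reach_refl)
      next
        assume us: "u \<in> safe nn K h"
        have ur: "u \<in> reach K h" using u reach_child[OF P(3)] by blast
        have uS: "u \<in> safe nn (fst H) (snd H)" using us Hh safe_sub[of h K h nn] by simp
        have sH: "sub (fst H) u = sub K u" using Hh sub_sub[OF assms(2) P(3) ur] by simp
        have un: "u \<in> nodes K" using u P(3) assms(2) by (auto simp: clos_def)
        have "\<forall>h g. sub (fst H) u = sub K h \<longrightarrow> G = sub K g \<longrightarrow> h \<in> nodes K \<longrightarrow> g \<in> nodes K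
          \<longrightarrow> (\<forall>x\<in>reach K h. nrm nn K x \<subseteq> NPs nn K g)"
          using pt_fun.hyps(4) uS by blast
        then show ?thesis using sH un P(2,4) xu by blast
      qed
    qed
  qed
qed


section \<open>A single rewrite step\<close>

lemma lab_child: "wf_lg ar G \<Longrightarrow> v \<in> nodes G \<Longrightarrow> u \<in> set (att G v) \<Longrightarrow> lab G v \<noteq> None"
proof
  assume "wf_lg ar G" "v \<in> nodes G" "u \<in> set (att G v)" "lab G v = None"
  then have "length (att G v) = 0" by (auto simp: wf_lg_def)
  then show False using \<open>u \<in> set (att G v)\<close> by simp
qed


locale step_ctx =
  fixes ar :: "'f \<Rightarrow> nat" and Cs :: "'f set" and nn :: "'f \<Rightarrow> nat"
    and prec :: "'f \<Rightarrow> 'f \<Rightarrow> bool" and rk :: "'f \<Rightarrow> nat"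
    and K :: "'f lg" and l r :: nat and Gg :: "'f lg" and \<rho> :: nat and \<phi> c :: "nat \<Rightarrow> nat"
  assumes tgG: "is_tg ar (Gg, \<rho>)"
    and crule: "constructor_rule ar Cs (K, l, r)"
    and sep: "separation ar Cs nn"
    and precd: "precedence Cs prec rk"
    and ptK: "pt nn prec (sub K r) (sub K l)"
    and homK: "hom (sub K l) Gg \<phi>"
    and injc: "inj_on c (labeled_nodes (sub K r))"
    and fresh: "c ` labeled_nodes (sub K r) \<inter> nodes Gg = {}"
begin

definition NN where "NN = labeled_nodes (sub K r)"
definition psi where "psi v = (if v \<in> NN then c v else \<phi> v)"
definition red where "red x = (if x = \<phi> l then psi r else x)"
definition G2 :: "'f lg" where
  "G2 = \<lparr>nodes = nodes Gg \<union> c ` NN,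
         lab = (\<lambda>w. if w \<in> c ` NN then lab K (inv_into NN c w) else lab Gg w),
         att = (\<lambda>w. map red (if w \<in> c ` NN then map psi (att K (inv_into NN c w)) else att Gg w))\<rparr>"

lemma rewrite_eq: "rewrite_result (Gg, \<rho>) K l r \<phi> c = sub G2 (red \<rho>)"
  unfolding rewrite_result_def Let_def fst_conv snd_conv G2_def red_def[abs_def] psi_def[abs_def] NN_def
  by simp

lemma wfK: "wf_lg ar K" and lK: "l \<in> nodes K" and rK: "r \<in> nodes K" and lr: "l \<noteq> r"
  and unlab: "\<forall>v\<in>reach K r. lab K v = None \<longrightarrow> v \<in> reach K l"
  using crule by (auto simp: constructor_rule_def is_rule_def)

lemma basicK: "basic_tg Cs (sub K l)"
  using crule by (auto simp: constructor_rule_def)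

definition f where "f = the (lab K l)"

lemma labl: "lab K l = Some f" and fD: "f \<notin> Cs"
  and argsC: "\<forall>v\<in>set (att K l). constr_tg Cs (sub K v)"
proof -
  have "lab (fst (sub K l)) l = lab K l" by simp
  then show "lab K l = Some f" "f \<notin> Cs" using basicK by (auto simp: basic_tg_def f_def)
  have "att (fst (sub K l)) l = att K l" by simp
  then have a: "\<forall>v\<in>set (att K l). constr_tg Cs (sub (fst (sub K l)) v)" using basicK by (simp add: basic_tg_def)
  show "\<forall>v\<in>set (att K l). constr_tg Cs (sub K v)"
  proof
    fix v assume v: "v \<in> set (att K l)"
    have "v \<in> reach K l" using reach_child[OF lK v] .
    then have "sub (fst (sub K l)) v = sub K v" by (rule sub_sub[OF wf_clos[OF wfK] lK])
    then show "constr_tg Cs (sub K v)" using a v by metis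
  qed
qed

lemma closK: "clos K" using wf_clos[OF wfK] .
lemma finK: "finite (nodes K)" using wfK by (simp add: wf_lg_def)
lemma acycK: "acyclic (edges K)" using wfK by (simp add: wf_lg_def)

lemma wfG: "wf_lg ar Gg" and \<rho>G: "\<rho> \<in> nodes Gg" and nodesG: "nodes Gg = reach Gg \<rho>"
  using tgG by (auto simp: is_tg_def)

lemma closG: "clos Gg" using wf_clos[OF wfG] .
lemma finG: "finite (nodes Gg)" using wfG by (simp add: wf_lg_def)
lemma acycG: "acyclic (edges Gg)" using wfG by (simp add: wf_lg_def)

lemma homD: "v \<in> reach K l \<Longrightarrow> \<phi> v \<in> nodes Gg"
  "v \<in> reach K l \<Longrightarrow> lab K v \<noteq> None \<Longrightarrow> lab Gg (\<phi> v) = lab K v \<and> att Gg (\<phi> v) = map \<phi> (att K v)"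
  using homK by (auto simp: hom_def)

lemma reachK_nodes: "v \<in> reach K l \<Longrightarrow> v \<in> nodes K"
  using reach_subset_nodes[OF closK lK] by blast

lemma reachKr_nodes: "v \<in> reach K r \<Longrightarrow> v \<in> nodes K"
  using reach_subset_nodes[OF closK rK] by blast

lemma edgeK_phi: "a \<in> reach K l \<Longrightarrow> (a, b) \<in> edges K \<Longrightarrow> (\<phi> a, \<phi> b) \<in> edges Gg \<and> b \<in> reach K l"
proof -
  assume a: "a \<in> reach K l" and ab: "(a, b) \<in> edges K"
  have an: "a \<in> nodes K" and b: "b \<in> set (att K a)" using ab by (auto simp: edges_iff)
  have "lab K a \<noteq> None" using lab_child[OF wfK an b] .
  then have "att Gg (\<phi> a) = map \<phi> (att K a)" using homD(2)[OF a] by blast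
  then show ?thesis using b homD(1)[OF a] reach_step[OF a an b] by (auto simp: edges_iff)
qed

lemma phi_rtrancl: "y \<in> reach K l \<Longrightarrow> (y, z) \<in> (edges K)\<^sup>* \<Longrightarrow> (\<phi> y, \<phi> z) \<in> (edges Gg)\<^sup>* \<and> z \<in> reach K l"
proof -
  assume y: "y \<in> reach K l" and yz: "(y, z) \<in> (edges K)\<^sup>*"
  from yz show ?thesis
  proof (induct rule: rtrancl_induct)
    case base then show ?case using y by simp
  next
    case (step a b)
    then have "(\<phi> a, \<phi> b) \<in> edges Gg" "b \<in> reach K l" using edgeK_phi by blast+
    then show ?case using step by (meson rtrancl_into_rtrancl)
  qed
qed

lemma phi_reach: "y \<in> reach K l \<Longrightarrow> z \<in> reach K y \<Longrightarrow> \<phi> z \<in> reach Gg (\<phi> y)"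
  using phi_rtrancl by (auto simp: reach_def)

lemma acyc_reach: "acyclic (edges G) \<Longrightarrow> y \<in> reach G x \<Longrightarrow> x \<in> reach G y \<Longrightarrow> x = y"
  by (auto simp: reach_def acyclic_def dest: rtranclD rtrancl_trancl_trancl)

lemma phi_strict:
  assumes z: "z \<in> reach K l" "z \<noteq> l"
  shows "\<phi> z \<noteq> \<phi> l" "\<phi> l \<notin> reach Gg (\<phi> z)"
proof -
  have "(l, z) \<in> (edges K)\<^sup>+" using z by (auto simp: reach_def dest: rtranclD)
  then obtain a where la: "(l, a) \<in> edges K" and az: "(a, z) \<in> (edges K)\<^sup>*" by (auto dest: tranclD)
  have "(\<phi> l, \<phi> a) \<in> edges Gg" "a \<in> reach K l" using edgeK_phi[OF reach_refl la] by auto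
  moreover have "(\<phi> a, \<phi> z) \<in> (edges Gg)\<^sup>*" using phi_rtrancl[OF \<open>a \<in> reach K l\<close> az] by blast
  ultimately have t: "(\<phi> l, \<phi> z) \<in> (edges Gg)\<^sup>+" by auto
  show "\<phi> z \<noteq> \<phi> l" using t acycG by (auto simp: acyclic_def)
  show "\<phi> l \<notin> reach Gg (\<phi> z)"
  proof
    assume "\<phi> l \<in> reach Gg (\<phi> z)"
    then have "(\<phi> z, \<phi> l) \<in> (edges Gg)\<^sup>*" by (simp add: reach_def)
    with t have "(\<phi> l, \<phi> l) \<in> (edges Gg)\<^sup>+" by (rule trancl_rtrancl_trancl)
    then show False using acycG by (simp add: acyclic_def)
  qed
qed

lemma acycK_reach: "u \<in> reach K l \<Longrightarrow> l \<in> reach K u \<Longrightarrow> u = l"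
  using acyc_reach[OF acycK] by blast


lemma NN_iff: "v \<in> NN \<longleftrightarrow> v \<in> reach K r \<and> lab K v \<noteq> None"
  by (simp add: NN_def labeled_nodes_def)

lemma c_notG: "v \<in> NN \<Longrightarrow> c v \<notin> nodes Gg"
  using fresh by (auto simp: NN_def)

lemma inv_c: "v \<in> NN \<Longrightarrow> inv_into NN c (c v) = v"
  using injc by (simp add: NN_def inv_into_f_f)

lemma nodes_G2: "nodes G2 = nodes Gg \<union> c ` NN" by (simp add: G2_def)
lemma lab_G2_c: "v \<in> NN \<Longrightarrow> lab G2 (c v) = lab K v" by (simp add: G2_def inv_c)
lemma att_G2_c: "v \<in> NN \<Longrightarrow> att G2 (c v) = map red (map psi (att K v))" by (simp add: G2_def inv_c)
lemma lab_G2_old: "w \<notin> c ` NN \<Longrightarrow> lab G2 w = lab Gg w" by (simp add: G2_def)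
lemma att_G2_old: "w \<notin> c ` NN \<Longrightarrow> att G2 w = map red (att Gg w)" by (simp add: G2_def)
lemma old_notc: "w \<in> nodes Gg \<Longrightarrow> w \<notin> c ` NN" using c_notG by blast

lemma phil_G: "\<phi> l \<in> nodes Gg" using homD(1)[OF reach_refl] .

lemma c_ne: "v \<in> NN \<Longrightarrow> c v \<noteq> \<phi> l"
proof
  assume "v \<in> NN" "c v = \<phi> l"
  then have "\<phi> l \<notin> nodes Gg" using c_notG by metis
  then show False using phil_G by contradiction
qed

lemma psi_r: "psi r \<noteq> \<phi> l" "psi r \<in> nodes G2"
proof -
  have "psi r \<noteq> \<phi> l \<and> psi r \<in> nodes G2"
  proof (cases "r \<in> NN")
    case True
    then show ?thesis using c_ne by (auto simp: psi_def nodes_G2)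
  next
    case False
    then have "lab K r = None" using NN_iff by auto
    then have "r \<in> reach K l" using unlab by auto
    then show ?thesis using False phi_strict(1)[of r] lr homD(1)[of r] by (auto simp: psi_def nodes_G2)
  qed
  then show "psi r \<noteq> \<phi> l" "psi r \<in> nodes G2" by auto
qed

lemma red_ne: "red x \<noteq> \<phi> l" using psi_r(1) by (simp add: red_def)

lemma red_id: "x \<noteq> \<phi> l \<Longrightarrow> red x = x" by (simp add: red_def)

lemma psi_nodes: "v \<in> reach K r \<Longrightarrow> psi v \<in> nodes G2"
proof (cases "v \<in> NN")
  case True then show ?thesis by (simp add: psi_def nodes_G2)
next
  case False
  assume v: "v \<in> reach K r"
  then have "v \<in> reach K l" using False NN_iff unlab by auto
  then show ?thesis using False homD(1) by (simp add: psi_def nodes_G2)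
qed

lemma red_nodes: "x \<in> nodes G2 \<Longrightarrow> red x \<in> nodes G2"
  using psi_r(2) by (simp add: red_def)

lemma closG2: "clos G2"
  unfolding clos_def
proof
  fix w assume w: "w \<in> nodes G2"
  show "set (att G2 w) \<subseteq> nodes G2"
  proof (cases "w \<in> c ` NN")
    case True
    then obtain y where y: "y \<in> NN" "w = c y" by blast
    have yr: "y \<in> reach K r" using y NN_iff by auto
    have "\<forall>v\<in>set (att K y). psi v \<in> nodes G2"
      using psi_nodes reach_step[OF yr reachKr_nodes[OF yr]] by blast
    then show ?thesis using y att_G2_c red_nodes by auto
  next
    case False
    then have wG: "w \<in> nodes Gg" using w nodes_G2 by auto
    have "set (att Gg w) \<subseteq> nodes Gg" using closG wG by (auto simp: clos_def)
    then show ?thesis using False att_G2_old red_nodes nodes_G2 by auto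
  qed
qed

lemma finG2: "finite (nodes G2)"
proof -
  have "finite NN" using finite_subset[OF _ finK] reachKr_nodes NN_iff by blast
  then show ?thesis using finG by (simp add: nodes_G2)
qed

lemma rho'_G2: "red \<rho> \<in> nodes G2" using red_nodes \<rho>G nodes_G2 by auto

lemma phil_notH: "\<phi> l \<notin> reach G2 (red \<rho>)"
proof
  assume "\<phi> l \<in> reach G2 (red \<rho>)"
  then have "(red \<rho>, \<phi> l) \<in> (edges G2)\<^sup>*" by (simp add: reach_def)
  then show False
  proof (cases rule: rtranclE)
    case base then show False using red_ne by metis
  next
    case (step y)
    then have "\<phi> l \<in> set (att G2 y)" by (simp add: edges_iff)
    moreover have "\<forall>x\<in>set (att G2 y). \<exists>z. x = red z" by (auto simp: G2_def)
    ultimately show False using red_ne by metis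
  qed
qed

lemma unchanged:
  assumes x: "x \<in> nodes Gg" and nx: "\<phi> l \<notin> reach Gg x"
  shows "\<forall>z\<in>reach Gg x. lab G2 z = lab Gg z \<and> att G2 z = att Gg z"
    "reach G2 x = reach Gg x" "sub G2 x = sub Gg x"
proof -
  show ag: "\<forall>z\<in>reach Gg x. lab G2 z = lab Gg z \<and> att G2 z = att Gg z"
  proof
    fix z assume z: "z \<in> reach Gg x"
    have zn: "z \<in> nodes Gg" using z reach_subset_nodes[OF closG x] by blast
    have "\<forall>y\<in>set (att Gg z). red y = y"
    proof
      fix y assume "y \<in> set (att Gg z)"
      then have "y \<in> reach Gg x" using reach_step[OF z zn] by blast
      then have "y \<noteq> \<phi> l" using nx by blast
      then show "red y = y" by (rule red_id)
    qed
    then have "map red (att Gg z) = att Gg z" by (simp add: map_idI)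
    then show "lab G2 z = lab Gg z \<and> att G2 z = att Gg z"
      using old_notc[OF zn] lab_G2_old att_G2_old by simp
  qed
  have ag2: "\<forall>z\<in>reach Gg x. z \<in> nodes G2 \<and> att G2 z = att Gg z"
    using ag reach_subset_nodes[OF closG x] nodes_G2 by blast
  show re: "reach G2 x = reach Gg x" using reach_agree[OF closG x ag2] .
  show "sub G2 x = sub Gg x" using sub_agree[OF re] ag by blast
qed

definition theta where "theta x = (if x \<in> c ` NN then \<phi> (inv_into NN c x) else x)"
definition SS where "SS u = c ` (NN \<inter> reach K u) \<union> reach Gg (\<phi> u)"

lemma theta_c: "v \<in> NN \<Longrightarrow> theta (c v) = \<phi> v" by (simp add: theta_def inv_c)
lemma theta_old: "w \<in> nodes Gg \<Longrightarrow> theta w = w" using old_notc by (simp add: theta_def)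

lemma morph_SS:
  assumes ul: "u \<in> reach K l" and unl: "u \<noteq> l"
  shows "morph (SS u) theta G2 Gg" "\<forall>x\<in>SS u. lab G2 x = None \<longrightarrow> theta x = x"
    "\<forall>x\<in>SS u. theta x \<in> reach Gg (\<phi> u)"
proof -
  have un: "\<phi> u \<in> nodes Gg" using homD(1)[OF ul] .
  have nlu: "\<phi> l \<notin> reach Gg (\<phi> u)" using phi_strict(2)[OF ul unl] .
  have A: "x \<in> nodes G2 \<and> theta x \<in> nodes Gg \<and> lab G2 x = lab Gg (theta x)
      \<and> att Gg (theta x) = map theta (att G2 x) \<and> set (att G2 x) \<subseteq> SS u
      \<and> (lab G2 x = None \<longrightarrow> theta x = x) \<and> theta x \<in> reach Gg (\<phi> u)" if x: "x \<in> SS u" for x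
  proof (cases "x \<in> c ` (NN \<inter> reach K u)")
    case True
    then obtain y where y: "y \<in> NN" "y \<in> reach K u" "x = c y" by blast
    have yl: "y \<in> reach K l" using reach_trans[OF ul y(2)] .
    have ylab: "lab K y \<noteq> None" and yr: "y \<in> reach K r" using y(1) NN_iff by auto
    have yn: "y \<in> nodes K" using reachK_nodes[OF yl] .
    have hy: "lab Gg (\<phi> y) = lab K y" "att Gg (\<phi> y) = map \<phi> (att K y)" using homD(2)[OF yl ylab] by auto
    have ch: "theta (red (psi v)) = \<phi> v \<and> red (psi v) \<in> SS u" if v: "v \<in> set (att K y)" for v
    proof -
      have vu: "v \<in> reach K u" using reach_step[OF y(2) yn v] .
      have vl: "v \<in> reach K l" using reach_trans[OF ul vu] .
      have vr: "v \<in> reach K r" using reach_step[OF yr yn v] .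
      have vnl: "v \<noteq> l"
      proof
        assume "v = l"
        then have "l \<in> reach K u" using vu by simp
        then show False using acycK_reach[OF ul] unl by blast
      qed
      show ?thesis
      proof (cases "v \<in> NN")
        case True
        have "c v \<noteq> \<phi> l" using c_ne[OF True] .
        then show ?thesis using True vu theta_c[OF True] by (simp add: psi_def red_id SS_def)
      next
        case False
        have "\<phi> v \<noteq> \<phi> l" using phi_strict(1)[OF vl vnl] .
        moreover have "\<phi> v \<in> nodes Gg" using homD(1)[OF vl] .
        moreover have "\<phi> v \<in> reach Gg (\<phi> u)" using phi_reach[OF ul vu] .
        ultimately show ?thesis using False theta_old by (simp add: psi_def red_id SS_def)
      qed
    qed
    have "map theta (att G2 x) = att Gg (theta x)"
      using ch y(1,3) att_G2_c theta_c hy(2) by simp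
    moreover have "set (att G2 x) \<subseteq> SS u" using ch y(1,3) att_G2_c by auto
    moreover have "x \<in> nodes G2" using y by (simp add: nodes_G2)
    moreover have "theta x = \<phi> y" using y theta_c by simp
    moreover have "\<phi> y \<in> reach Gg (\<phi> u)" using phi_reach[OF ul y(2)] .
    ultimately show ?thesis using hy(1) y ylab lab_G2_c homD(1)[OF yl] by auto
  next
    case False
    then have xr: "x \<in> reach Gg (\<phi> u)" using x by (simp add: SS_def)
    have xn: "x \<in> nodes Gg" using xr reach_subset_nodes[OF closG un] by blast
    have "\<phi> l \<notin> reach Gg x" using nlu reach_trans[OF xr] by blast
    note uc = unchanged[OF xn this]
    have ch: "\<forall>w\<in>set (att Gg x). w \<in> nodes Gg \<and> w \<in> reach Gg (\<phi> u)"
      using reach_step[OF xr xn] closG xn by (auto simp: clos_def)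
    have "map theta (att Gg x) = att Gg x" using ch theta_old by (simp add: map_idI)
    then show ?thesis using uc(1) xn theta_old ch xr by (auto simp: nodes_G2 SS_def)
  qed
  show "morph (SS u) theta G2 Gg" using A by (simp add: morph_def)
  show "\<forall>x\<in>SS u. lab G2 x = None \<longrightarrow> theta x = x" using A by blast
  show "\<forall>x\<in>SS u. theta x \<in> reach Gg (\<phi> u)" using A by blast
qed

lemma psi_SS:
  assumes ul: "u \<in> reach K l" and unl: "u \<noteq> l" and ur: "u \<in> reach K r"
  shows "psi u \<in> SS u" "theta (psi u) = \<phi> u" "red (psi u) = psi u"
proof -
  have "psi u \<in> SS u \<and> theta (psi u) = \<phi> u \<and> red (psi u) = psi u"
  proof (cases "u \<in> NN")
    case True
    have "c u \<noteq> \<phi> l" using c_ne[OF True] .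
    then show ?thesis using True theta_c by (simp add: psi_def SS_def red_id)
  next
    case False
    then show ?thesis using phi_strict(1)[OF ul unl] theta_old homD(1)[OF ul]
      by (simp add: psi_def SS_def red_id)
  qed
  then show "psi u \<in> SS u" "theta (psi u) = \<phi> u" "red (psi u) = psi u" by auto
qed


definition NPK where "NPK = (\<Union>w\<in>nrm nn K l. reach K w)"

lemma NPs_l: "NPs nn K l = NPK"
proof
  show "NPK \<subseteq> NPs nn K l"
  proof
    fix x assume "x \<in> NPK"
    then obtain w where "w \<in> nrm nn K l" "x \<in> reach K w" by (auto simp: NPK_def)
    then show "x \<in> NPs nn K l" by (rule NPs_intro[OF reach_refl])
  qed
  show "NPs nn K l \<subseteq> NPK"
  proof
    fix x assume "x \<in> NPs nn K l"
    then obtain y w where y: "y \<in> reach K l" and w: "w \<in> nrm nn K y" and x: "x \<in> reach K w"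
      by (auto simp: NPs_def)
    show "x \<in> NPK"
    proof (cases "y = l")
      case True then show ?thesis using w x by (auto simp: NPK_def)
    next
      case False
      then obtain u where u: "u \<in> set (att K l)" "y \<in> reach K u" using y reach_unfold[OF lK] by blast
      have "constr_tg Cs (sub K u)" using argsC u(1) by blast
      then have "\<forall>g. lab K y = Some g \<longrightarrow> g \<in> Cs" using u(2) unfolding constr_sub_iff by blast
      then have "nrm nn K y = {}" using sep by (auto simp: nrm_def separation_def split: option.splits)
      then show ?thesis using w by simp
    qed
  qed
qed

lemma rhs_nrm: "x \<in> reach K r \<Longrightarrow> nrm nn K x \<subseteq> NPK"
  using pt_nrm[OF ptK closK, of r l] rK lK NPs_l by auto

lemma rhs_prec: "x \<in> reach K r \<Longrightarrow> lab K x = Some g \<Longrightarrow> prec g f"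
proof -
  assume x: "x \<in> reach K r" and g: "lab K x = Some g"
  have "lab_below prec (sub K r) (sub K l)" using pt_lab_below[OF ptK] .
  then show "prec g f" using x g labl by (auto simp: lab_below_def)
qed

lemma NPK_sub: "u \<in> NPK \<Longrightarrow> u \<in> reach K l \<and> u \<noteq> l"
proof -
  assume "u \<in> NPK"
  then obtain w where w: "w \<in> nrm nn K l" "u \<in> reach K w" by (auto simp: NPK_def)
  have wa: "w \<in> set (att K l)" using w(1) nrm_att by blast
  have ul: "u \<in> reach K l" using reach_trans[OF reach_child[OF lK wa] w(2)] .
  have "u \<noteq> l"
  proof
    assume "u = l"
    then have "(w, l) \<in> (edges K)\<^sup>*" using w(2) by (simp add: reach_def)
    moreover have "(l, w) \<in> edges K" using wa lK by (simp add: edges_iff)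
    ultimately have "(l, l) \<in> (edges K)\<^sup>+" by auto
    then show False using acycK by (simp add: acyclic_def)
  qed
  then show ?thesis using ul by blast
qed

lemma NPK_constr: "u \<in> NPK \<Longrightarrow> z \<in> reach K u \<Longrightarrow> lab K z = Some g \<Longrightarrow> g \<in> Cs"
proof -
  assume "u \<in> NPK" "z \<in> reach K u" "lab K z = Some g"
  then obtain w where w: "w \<in> nrm nn K l" "u \<in> reach K w" by (auto simp: NPK_def)
  have "constr_tg Cs (sub K w)" using argsC w(1) nrm_att by blast
  then show "g \<in> Cs" using reach_trans[OF w(2) \<open>z \<in> reach K u\<close>] \<open>lab K z = Some g\<close>
    unfolding constr_sub_iff by blast
qed

lemma hom_l: "lab Gg (\<phi> l) = Some f" "att Gg (\<phi> l) = map \<phi> (att K l)"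
  using homD(2)[OF reach_refl] labl by auto

lemma nrm_phil: "nrm nn Gg (\<phi> l) = \<phi> ` nrm nn K l"
  using hom_l labl by (simp add: nrm_def take_map)

lemma NPK_phi: "u \<in> NPK \<Longrightarrow> \<exists>w'\<in>nrm nn Gg (\<phi> l). \<phi> u \<in> reach Gg w'"
proof -
  assume "u \<in> NPK"
  then obtain w where w: "w \<in> nrm nn K l" "u \<in> reach K w" by (auto simp: NPK_def)
  have "w \<in> reach K l" using reach_child[OF lK] w(1) nrm_att by blast
  then have "\<phi> u \<in> reach Gg (\<phi> w)" using phi_reach w(2) by blast
  then show ?thesis using w(1) nrm_phil by blast
qed

lemma phil_notin_constr: "constr_tg Cs (sub Gg w) \<Longrightarrow> \<phi> l \<notin> reach Gg w"
  using hom_l(1) fD unfolding constr_sub_iff by blast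

lemma nrm_G2_c: "y \<in> NN \<Longrightarrow> nrm nn G2 (c y) = (\<lambda>u. red (psi u)) ` nrm nn K y"
  using lab_G2_c att_G2_c by (simp add: nrm_def take_map image_image split: option.splits)

end

definition NAC :: "'f set \<Rightarrow> ('f \<Rightarrow> nat) \<Rightarrow> 'f lg \<Rightarrow> bool" where
  "NAC Cs nn G \<longleftrightarrow> (\<forall>v\<in>nodes G. \<forall>w\<in>nrm nn G v. constr_tg Cs (sub G w))"

definition TINV :: "'f trm set \<Rightarrow> ('f \<Rightarrow> nat) \<Rightarrow> 'f lg \<Rightarrow> bool" where
  "TINV T0 nn G \<longleftrightarrow> (\<forall>v\<in>nodes G. \<forall>w\<in>nrm nn G v. \<forall>x\<in>reach G w. \<forall>t. repr G x t \<longrightarrow> t \<in> T0)"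

section \<open>Interpretation as a sum over non-constructor nodes\<close>

lemma constr_mono: "constr_tg Cs (sub G y) \<Longrightarrow> z \<in> reach G y \<Longrightarrow> constr_tg Cs (sub G z)"
proof -
  assume A: "constr_tg Cs (sub G y)" and zy: "z \<in> reach G y"
  show "constr_tg Cs (sub G z)"
    unfolding constr_sub_iff
  proof (intro ballI allI impI)
    fix w g assume w: "w \<in> reach G z" and g: "lab G w = Some g"
    have "w \<in> reach G y" by (rule reach_trans[OF zy w])
    then show "g \<in> Cs" using A g unfolding constr_sub_iff by blast
  qed
qed

lemma NC_SP:
  assumes tg: "is_tg ar (G, \<rho>)" and nac: "NAC Cs nn G" and x: "x \<in> nodes G"
    and nc: "\<not> constr_tg Cs (sub G x)"
  shows "x \<in> SP nn (G, \<rho>)"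
proof -
  have wf: "wf_lg ar G" and eq: "nodes G = reach G \<rho>" using tg by (auto simp: is_tg_def)
  have "(\<rho>, x) \<in> (edges G)\<^sup>*" using x eq by (simp add: reach_def)
  then have "\<not> constr_tg Cs (sub G x) \<longrightarrow> (\<rho>, x) \<in> (safe_edges nn G)\<^sup>*"
  proof (induct rule: rtrancl_induct)
    case base then show ?case by simp
  next
    case (step y z)
    show ?case
    proof
      assume ncz: "\<not> constr_tg Cs (sub G z)"
      have yn: "y \<in> nodes G" and zy: "z \<in> set (att G y)" using step(2) by (auto simp: edges_iff)
      have "\<not> constr_tg Cs (sub G y)"
      proof
        assume "constr_tg Cs (sub G y)"
        then have "constr_tg Cs (sub G z)" using constr_mono reach_child[OF yn zy] by metis
        then show False using ncz by contradiction
      qed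
      then have IH: "(\<rho>, y) \<in> (safe_edges nn G)\<^sup>*" using step(3) by blast
      have "lab G y \<noteq> None" using lab_child[OF wf yn zy] .
      then have "z \<in> nrm nn G y \<union> safe nn G y" using att_nrm_safe zy by metis
      then have "z \<in> nrm nn G y \<or> z \<in> safe nn G y" by simp
      moreover have "z \<notin> nrm nn G y" using nac yn ncz by (auto simp: NAC_def)
      ultimately have "(y, z) \<in> safe_edges nn G" using yn by (simp add: safe_edges_def)
      then show "(\<rho>, z) \<in> (safe_edges nn G)\<^sup>*" using IH by (meson rtrancl_into_rtrancl)
    qed
  qed
  then show ?thesis using nc by (simp add: SP_def)
qed

lemma SP_nodes:
  assumes "clos G" "\<rho> \<in> nodes G" shows "SP nn (G, \<rho>) \<subseteq> nodes G"
proof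
  fix v assume "v \<in> SP nn (G, \<rho>)"
  then have "(\<rho>, v) \<in> (safe_edges nn G)\<^sup>*" by (simp add: SP_def)
  then show "v \<in> nodes G"
  proof (induct rule: rtrancl_induct)
    case base then show ?case using assms by simp
  next
    case (step y z)
    then have "y \<in> nodes G" "z \<in> safe nn G y" by (auto simp: safe_edges_def)
    then show ?case using assms(1) safe_att[of nn G y] unfolding clos_def by blast
  qed
qed

lemma finite_nrm: "finite (nrm nn G v)" by (simp add: nrm_def split: option.splits)

lemma pi_eq:
  assumes tg: "is_tg ar (G, \<rho>)" and nac: "NAC Cs nn G"
  shows "pi Cs rk nn ell (G, \<rho>) = (\<Sum>x\<in>{x\<in>nodes G. \<not> constr_tg Cs (sub G x)}. pj rk nn ell (sub G x))"
proof -
  have wf: "wf_lg ar G" and r: "\<rho> \<in> nodes G" using tg by (auto simp: is_tg_def)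
  have "{v\<in>SP nn (G, \<rho>). \<not> constr_tg Cs (sub G v)} = {x\<in>nodes G. \<not> constr_tg Cs (sub G x)}"
    using SP_nodes[OF wf_clos[OF wf] r] NC_SP[OF tg nac] by blast
  then show ?thesis by (simp add: pi_def)
qed

lemma pi_le:
  assumes "clos G" "\<rho> \<in> nodes G" "finite (nodes G)"
  shows "pi Cs rk nn ell (G, \<rho>) \<le> (\<Sum>x\<in>{x\<in>nodes G. \<not> constr_tg Cs (sub G x)}. pj rk nn ell (sub G x))"
  unfolding pi_def fst_conv using SP_nodes[OF assms(1,2)] assms(3)
  by (intro sum_mono2) auto

locale step_inv = step_ctx +
  fixes T0
  assumes nacG: "NAC Cs nn Gg" and tinvG: "TINV T0 nn Gg"
begin


lemma old_nrm:
  assumes v: "v \<in> nodes Gg"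
  shows "nrm nn G2 v = nrm nn Gg v"
    "\<And>w. w \<in> nrm nn Gg v \<Longrightarrow> w \<in> nodes Gg \<and> \<phi> l \<notin> reach Gg w"
proof -
  show W: "w \<in> nodes Gg \<and> \<phi> l \<notin> reach Gg w" if w: "w \<in> nrm nn Gg v" for w
  proof -
    have "constr_tg Cs (sub Gg w)" using nacG v w by (simp add: NAC_def)
    moreover have "w \<in> nodes Gg" using w nrm_att[of nn Gg v] closG v unfolding clos_def by blast
    ultimately show ?thesis using phil_notin_constr by blast
  qed
  have rid: "\<forall>w\<in>nrm nn Gg v. red w = w"
  proof
    fix w assume "w \<in> nrm nn Gg v"
    then have "w \<noteq> \<phi> l" using W by fastforce
    then show "red w = w" by (rule red_id)
  qed
  have "nrm nn G2 v = red ` nrm nn Gg v"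
    using lab_G2_old[OF old_notc[OF v]] att_G2_old[OF old_notc[OF v]]
    by (simp add: nrm_def take_map split: option.splits)
  also have "\<dots> = nrm nn Gg v" using rid by (simp add: image_iff)
  finally show "nrm nn G2 v = nrm nn Gg v" .
qed

lemma core:
  assumes v: "v \<in> nodes G2" and w: "w \<in> nrm nn G2 v"
  shows "constr_tg Cs (sub G2 w)" "\<forall>x\<in>reach G2 w. \<forall>t. repr G2 x t \<longrightarrow> t \<in> T0"
proof -
  have "constr_tg Cs (sub G2 w) \<and> (\<forall>x\<in>reach G2 w. \<forall>t. repr G2 x t \<longrightarrow> t \<in> T0)"
  proof (cases "v \<in> c ` NN")
    case True
    then obtain y where y: "y \<in> NN" "v = c y" by blast
    then obtain u where u: "u \<in> nrm nn K y" and wu: "w = red (psi u)" using w nrm_G2_c by auto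
    have yr: "y \<in> reach K r" using y NN_iff by auto
    have ur: "u \<in> reach K r" using reach_step[OF yr reachKr_nodes[OF yr]] u nrm_att by blast
    have uN: "u \<in> NPK" using rhs_nrm[OF yr] u by blast
    have ul: "u \<in> reach K l" "u \<noteq> l" using NPK_sub[OF uN] by auto
    note ps = psi_SS[OF ul ur]
    note ms = morph_SS[OF ul]
    have wp: "w = psi u" using wu ps(3) by simp
    obtain w' where w': "w' \<in> nrm nn Gg (\<phi> l)" "\<phi> u \<in> reach Gg w'" using NPK_phi[OF uN] by blast
    have cw': "constr_tg Cs (sub Gg w')" using nacG phil_G w'(1) by (simp add: NAC_def)
    have Z: "z \<in> SS u \<and> theta z \<in> reach Gg w'" if z: "z \<in> reach G2 w" for z
      using morph_reach[OF ms(1) ps(1)] z wp ps(2) reach_trans[OF w'(2)] by auto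
    have c1: "constr_tg Cs (sub G2 w)"
      unfolding constr_sub_iff
    proof (intro ballI allI impI)
      fix z g assume z: "z \<in> reach G2 w" and g: "lab G2 z = Some g"
      have "lab Gg (theta z) = Some g" using Z[OF z] ms(1) g by (auto simp: morph_def)
      then show "g \<in> Cs" using cw' Z[OF z] unfolding constr_sub_iff by blast
    qed
    have c2: "\<forall>x\<in>reach G2 w. \<forall>t. repr G2 x t \<longrightarrow> t \<in> T0"
    proof (intro ballI allI impI)
      fix z t assume z: "z \<in> reach G2 w" and t: "repr G2 z t"
      have "repr Gg (theta z) t" using morph_repr[OF ms(1) t _ ms(2)] Z[OF z] by blast
      then show "t \<in> T0" using tinvG phil_G w'(1) Z[OF z] unfolding TINV_def by blast
    qed
    show ?thesis using c1 c2 by blast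
  next
    case False
    then have vG: "v \<in> nodes Gg" using v nodes_G2 by auto
    have wG: "w \<in> nrm nn Gg v" using w old_nrm(1)[OF vG] by simp
    have W: "w \<in> nodes Gg" "\<phi> l \<notin> reach Gg w" using old_nrm(2)[OF vG wG] by auto
    note uc = unchanged[OF W]
    have c1: "constr_tg Cs (sub G2 w)" using nacG vG wG uc(3) by (simp add: NAC_def)
    have c2: "\<forall>x\<in>reach G2 w. \<forall>t. repr G2 x t \<longrightarrow> t \<in> T0"
    proof (intro ballI allI impI)
      fix z t assume z: "z \<in> reach G2 w" and t: "repr G2 z t"
      have zr: "z \<in> reach Gg w" using z uc(2) by simp
      have "\<forall>x\<in>reach Gg w. lab Gg x = lab G2 x \<and> att Gg x = att G2 x \<and> set (att G2 x) \<subseteq> reach Gg w"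
        using uc(1) reach_closed_att[OF closG W(1)] by auto
      then have "repr Gg z t" using repr_transfer[OF t zr] by blast
      then show "t \<in> T0" using tinvG vG wG zr by (simp add: TINV_def)
    qed
    show ?thesis using c1 c2 by blast
  qed
  then show "constr_tg Cs (sub G2 w)" "\<forall>x\<in>reach G2 w. \<forall>t. repr G2 x t \<longrightarrow> t \<in> T0" by auto
qed

abbreviation RH where "RH \<equiv> reach G2 (red \<rho>)"

lemma RH_nodes: "RH \<subseteq> nodes G2" using reach_subset_nodes[OF closG2 rho'_G2] .

lemma RH_child: "v \<in> RH \<Longrightarrow> w \<in> set (att G2 v) \<Longrightarrow> w \<in> RH"
  using reach_step RH_nodes by blast

lemma subH: "v \<in> RH \<Longrightarrow> sub (fst (sub G2 (red \<rho>))) v = sub G2 v"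
  using sub_sub[OF closG2 rho'_G2] .

lemma nac_H: "NAC Cs nn (fst (sub G2 (red \<rho>)))"
  unfolding NAC_def
proof (intro ballI)
  fix v w assume v: "v \<in> nodes (fst (sub G2 (red \<rho>)))" and w: "w \<in> nrm nn (fst (sub G2 (red \<rho>))) v"
  have vR: "v \<in> RH" using v by simp
  have w2: "w \<in> nrm nn G2 v" using w nrm_sub[OF vR] by simp
  have wR: "w \<in> RH" using RH_child[OF vR] w2 nrm_att by blast
  show "constr_tg Cs (sub (fst (sub G2 (red \<rho>))) w)"
    using core(1)[OF _ w2] RH_nodes vR subH[OF wR] by auto
qed

lemma tinv_H: "TINV T0 nn (fst (sub G2 (red \<rho>)))"
  unfolding TINV_def
proof (intro ballI allI impI)
  fix v w x t assume v: "v \<in> nodes (fst (sub G2 (red \<rho>)))" and w: "w \<in> nrm nn (fst (sub G2 (red \<rho>))) v"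
    and x: "x \<in> reach (fst (sub G2 (red \<rho>))) w" and t: "repr (fst (sub G2 (red \<rho>))) x t"
  have vR: "v \<in> RH" using v by simp
  have w2: "w \<in> nrm nn G2 v" using w nrm_sub[OF vR] by simp
  have wR: "w \<in> RH" using RH_child[OF vR] w2 nrm_att by blast
  have x2: "x \<in> reach G2 w" using x reach_sub[OF closG2 rho'_G2 wR] by simp
  have xR: "x \<in> RH" using reach_trans[OF wR x2] .
  have "\<forall>z\<in>RH. lab G2 z = lab (fst (sub G2 (red \<rho>))) z \<and> att G2 z = att (fst (sub G2 (red \<rho>))) z
      \<and> set (att (fst (sub G2 (red \<rho>))) z) \<subseteq> RH"
    using reach_closed_att[OF closG2 rho'_G2] by simp
  then have "repr G2 x t" using repr_transfer[OF t xR] by blast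
  then show "t \<in> T0" using core(2)[OF _ w2] RH_nodes vR x2 by blast
qed


lemma decrease:
  assumes ell: "0 < ell" and dar: "\<forall>g. ar g \<le> d" and dell: "d \<le> ell"
    and cardr: "card (reach K r) \<le> 1 + ell"
  shows "pi Cs rk nn ell (sub G2 (red \<rho>)) < pi Cs rk nn ell (Gg, \<rho>)"
proof -
  define HG where "HG = fst (sub G2 (red \<rho>))"
  have Hs: "sub G2 (red \<rho>) = (HG, red \<rho>)" by (simp add: HG_def sub_def)
  have HGn: "nodes HG = RH" by (simp add: HG_def)
  have subHG: "x \<in> RH \<Longrightarrow> sub HG x = sub G2 x" for x using subH by (simp add: HG_def)
  define pjG where "pjG x = pj rk nn ell (sub Gg x)" for x
  define NCG where "NCG = {x\<in>nodes Gg. \<not> constr_tg Cs (sub Gg x)}"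
  define NCH where "NCH = {x\<in>nodes HG. \<not> constr_tg Cs (sub HG x)}"
  define D where "D = (\<Sum>w\<in>nrm nn Gg (\<phi> l). depth (sub Gg w))"
  define B where "B = (1 + ell) ^ (2 * rk f - 2) * (1 + d * D)"
  have finNCG: "finite NCG" using finG by (simp add: NCG_def)
  have finRH: "finite RH" using finite_subset[OF RH_nodes finG2] .
  have finNCH: "finite NCH" using finRH HGn by (simp add: NCH_def)
  have a: "pi Cs rk nn ell (sub G2 (red \<rho>)) \<le> (\<Sum>x\<in>NCH. pj rk nn ell (sub HG x))"
  proof -
    have "clos HG" using clos_sub[OF closG2 rho'_G2] by (simp add: HG_def)
    moreover have "red \<rho> \<in> nodes HG" using HGn by simp
    moreover have "finite (nodes HG)" using HGn finRH by simp
    ultimately show ?thesis unfolding Hs NCH_def by (rule pi_le)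
  qed
  have c: "x \<in> NCG - {\<phi> l} \<and> pj rk nn ell (sub HG x) = pjG x" if x: "x \<in> NCH - c ` NN" for x
  proof -
    have xR: "x \<in> RH" and ncx: "\<not> constr_tg Cs (sub G2 x)" and xc: "x \<notin> c ` NN"
      using x subHG HGn by (auto simp: NCH_def)
    have xG: "x \<in> nodes Gg" using xR RH_nodes xc nodes_G2 by auto
    have ncG: "\<not> constr_tg Cs (sub Gg x)"
    proof
      assume "constr_tg Cs (sub Gg x)"
      then have "\<phi> l \<notin> reach Gg x" using phil_notin_constr by blast
      then have "sub G2 x = sub Gg x" using unchanged(3)[OF xG] by blast
      then show False using ncx \<open>constr_tg Cs (sub Gg x)\<close> by simp
    qed
    have xnl: "x \<noteq> \<phi> l" using xR phil_notH by blast
    have nr: "nrm nn G2 x = nrm nn Gg x" using old_nrm(1)[OF xG] .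
    have dep: "\<forall>u\<in>nrm nn Gg x. depth (sub G2 u) = depth (sub Gg u)"
      using old_nrm(2)[OF xG] unchanged(3) by simp
    have "pj rk nn ell (sub HG x) = pj rk nn ell (sub G2 x)" using subHG[OF xR] by simp
    also have "\<dots> = (1 + ell) ^ (2 * rk (the (lab G2 x))) * (1 + (\<Sum>u\<in>nrm nn G2 x. depth (sub G2 u)))"
      using pj_sub[OF closG2] xR RH_nodes by blast
    also have "\<dots> = (1 + ell) ^ (2 * rk (the (lab Gg x))) * (1 + (\<Sum>u\<in>nrm nn Gg x. depth (sub Gg u)))"
      using nr dep lab_G2_old[OF xc] by simp
    also have "\<dots> = pjG x" using pj_sub[OF closG xG] by (simp add: pjG_def)
    finally show ?thesis using xG ncG xnl by (simp add: NCG_def)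
  qed
  have pjpos: "0 < pjG (\<phi> l)"
    using pj_sub[OF closG phil_G] by (simp add: pjG_def)
  have pjl: "pjG (\<phi> l) = (1 + ell) ^ (2 * rk f) * (1 + D)"
    using pj_sub[OF closG phil_G] hom_l(1) by (simp add: pjG_def D_def)
  have d: "pj rk nn ell (sub HG x) \<le> B \<and> 1 \<le> rk f" if x: "x \<in> NCH \<inter> c ` NN" for x
  proof -
    obtain y where y: "y \<in> NN" "x = c y" using x by blast
    have xR: "x \<in> RH" using x HGn by (simp add: NCH_def)
    have yr: "y \<in> reach K r" using y NN_iff by auto
    obtain g where g: "lab K y = Some g" using y NN_iff by auto
    have pg: "prec g f" using rhs_prec[OF yr g] .
    have rkg: "rk g < rk f" using precd pg by (simp add: precedence_def)
    have yK: "y \<in> nodes K" using reachKr_nodes[OF yr] .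
    have each: "depth (sub G2 (red (psi u))) \<le> D" if u: "u \<in> nrm nn K y" for u
    proof -
      have ur: "u \<in> reach K r" using reach_step[OF yr yK] u nrm_att by blast
      have uN: "u \<in> NPK" using rhs_nrm[OF yr] u by blast
      have ul: "u \<in> reach K l" "u \<noteq> l" using NPK_sub[OF uN] by auto
      note ps = psi_SS[OF ul ur]
      note ms = morph_SS[OF ul]
      obtain w' where w': "w' \<in> nrm nn Gg (\<phi> l)" "\<phi> u \<in> reach Gg w'" using NPK_phi[OF uN] by blast
      have w'n: "w' \<in> nodes Gg" using w'(1) nrm_att[of nn Gg "\<phi> l"] closG phil_G unfolding clos_def by blast
      have "depth (sub G2 (red (psi u))) = depth (sub G2 (psi u))" using ps(3) by simp
      also have "\<dots> \<le> depth (sub Gg (theta (psi u)))"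
        using morph_depth[OF ms(1) ps(1) closG2 finG closG acycG] .
      also have "\<dots> = depth (sub Gg (\<phi> u))" using ps(2) by simp
      also have "\<dots> \<le> depth (sub Gg w')" using depth_mono[OF finG closG acycG w'n w'(2)] .
      also have "\<dots> \<le> D" unfolding D_def using w'(1) finite_nrm by (intro member_le_sum) auto
      finally show ?thesis .
    qed
    have cardn: "card (nrm nn K y) \<le> d"
    proof -
      have "nrm nn K y = set (take (nn g) (att K y))" by (simp add: nrm_def g)
      then have "card (nrm nn K y) \<le> length (take (nn g) (att K y))"
        using card_length by metis
      also have "\<dots> \<le> length (att K y)" by simp
      also have "\<dots> = ar g" using wfK yK g by (auto simp: wf_lg_def)
      also have "\<dots> \<le> d" using dar by blast
      finally show ?thesis .
    qed
    have "(\<Sum>u'\<in>nrm nn G2 (c y). depth (sub G2 u')) \<le> (\<Sum>u\<in>nrm nn K y. depth (sub G2 (red (psi u))))"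
      unfolding nrm_G2_c[OF y(1)] by (rule order.trans[OF sum_image_le]) (auto simp: nrm_def split: option.splits)
    also have "\<dots> \<le> card (nrm nn K y) * D"
      using sum_bounded_above[of "nrm nn K y" "\<lambda>u. depth (sub G2 (red (psi u)))" D] each by simp
    also have "\<dots> \<le> d * D" using cardn by (simp add: mult_right_mono)
    finally have sd: "(\<Sum>u'\<in>nrm nn G2 (c y). depth (sub G2 u')) \<le> d * D" .
    have pw: "(1 + ell) ^ (2 * rk g) \<le> (1 + ell) ^ (2 * rk f - 2)"
      using rkg by (intro power_increasing) auto
    have "pj rk nn ell (sub HG x) = pj rk nn ell (sub G2 (c y))" using subHG[OF xR] y by simp
    also have "\<dots> = (1 + ell) ^ (2 * rk g) * (1 + (\<Sum>u'\<in>nrm nn G2 (c y). depth (sub G2 u')))"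
      using pj_sub[OF closG2] xR RH_nodes y lab_G2_c g by auto
    also have "\<dots> \<le> B" unfolding B_def using pw sd by (intro mult_mono) auto
    finally show ?thesis using rkg by simp
  qed
  have cardnew: "card (NCH \<inter> c ` NN) \<le> 1 + ell"
  proof -
    have "finite NN" using finite_subset[OF _ finK] reachKr_nodes NN_iff by blast
    have "card (NCH \<inter> c ` NN) \<le> card (c ` NN)" using \<open>finite NN\<close> by (intro card_mono) auto
    also have "\<dots> \<le> card NN" by (rule card_image_le[OF \<open>finite NN\<close>])
    also have "\<dots> \<le> card (reach K r)"
      using NN_iff finite_subset[OF reach_subset_nodes[OF closK rK] finK] by (intro card_mono) auto
    finally show ?thesis using cardr by simp
  qed
  have newsum: "(\<Sum>x\<in>NCH \<inter> c ` NN. pj rk nn ell (sub HG x)) < pjG (\<phi> l)"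
  proof (cases "NCH \<inter> c ` NN = {}")
    case True then show ?thesis using pjpos by simp
  next
    case False
    then obtain x0 where "x0 \<in> NCH \<inter> c ` NN" by blast
    then have rf: "1 \<le> rk f" using d by blast
    have "(\<Sum>x\<in>NCH \<inter> c ` NN. pj rk nn ell (sub HG x)) \<le> card (NCH \<inter> c ` NN) * B"
      using sum_bounded_above[of "NCH \<inter> c ` NN" "\<lambda>x. pj rk nn ell (sub HG x)" B] d by simp
    also have "\<dots> \<le> (1 + ell) * B" using cardnew by (rule mult_right_mono) simp
    also have "\<dots> = (1 + ell) ^ (2 * rk f - 1) * (1 + d * D)"
    proof -
      have "2 * rk f - 1 = Suc (2 * rk f - 2)" using rf by simp
      then have e: "(1 + ell) ^ (2 * rk f - 1) = (1 + ell) * (1 + ell) ^ (2 * rk f - 2)"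
        by (metis power_Suc)
      show ?thesis by (simp only: B_def e mult.assoc)
    qed
    also have "\<dots> < (1 + ell) ^ (2 * rk f - 1) * ((1 + ell) * (1 + D))"
    proof (rule mult_strict_left_mono)
      have "d * D \<le> ell * D" using dell by (rule mult_right_mono) simp
      moreover have "(1 + ell) * (1 + D) = 1 + ell + ell * D + D" by (simp add: algebra_simps)
      ultimately show "1 + d * D < (1 + ell) * (1 + D)" using ell by linarith
    qed simp
    also have "\<dots> = pjG (\<phi> l)"
    proof -
      have "2 * rk f = Suc (2 * rk f - 1)" using rf by simp
      then have "(1 + ell) ^ (2 * rk f) = (1 + ell) ^ (2 * rk f - 1) * (1 + ell)"
        by (metis power_Suc2)
      then show ?thesis using pjl by (simp only: mult.assoc)
    qed
    finally show ?thesis .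
  qed
  have oldsum: "(\<Sum>x\<in>NCH - c ` NN. pj rk nn ell (sub HG x)) \<le> (\<Sum>x\<in>NCG - {\<phi> l}. pjG x)"
  proof -
    have "(\<Sum>x\<in>NCH - c ` NN. pj rk nn ell (sub HG x)) = (\<Sum>x\<in>NCH - c ` NN. pjG x)"
      using c by (intro sum.cong) auto
    also have "\<dots> \<le> (\<Sum>x\<in>NCG - {\<phi> l}. pjG x)"
      using c finNCG by (intro sum_mono2) auto
    finally show ?thesis .
  qed
  have philNCG: "\<phi> l \<in> NCG"
  proof -
    have "\<not> constr_tg Cs (sub Gg (\<phi> l))" using hom_l(1) fD unfolding constr_sub_iff by auto
    then show ?thesis using phil_G by (simp add: NCG_def)
  qed
  have piG: "pi Cs rk nn ell (Gg, \<rho>) = pjG (\<phi> l) + (\<Sum>x\<in>NCG - {\<phi> l}. pjG x)"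
    using pi_eq[OF tgG nacG] sum.remove[OF finNCG philNCG] by (simp add: NCG_def pjG_def)
  have "pi Cs rk nn ell (sub G2 (red \<rho>)) \<le> (\<Sum>x\<in>NCH \<inter> c ` NN. pj rk nn ell (sub HG x))
      + (\<Sum>x\<in>NCH - c ` NN. pj rk nn ell (sub HG x))"
    using a sum.Int_Diff[OF finNCH, of "\<lambda>x. pj rk nn ell (sub HG x)" "c ` NN"] by simp
  also have "\<dots> < pjG (\<phi> l) + (\<Sum>x\<in>NCG - {\<phi> l}. pjG x)" using newsum oldsum by simp
  finally show ?thesis using piG by simp
qed


lemma reach_leaf: "v \<in> nodes K \<Longrightarrow> lab K v = None \<Longrightarrow> reach K v = {v}"
proof -
  assume v: "v \<in> nodes K" and n: "lab K v = None"
  then have "att K v = []" using wfK by (auto simp: wf_lg_def)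
  then show ?thesis using reach_unfold[OF v] by simp
qed

lemma inf_bound:
  assumes i: "max_shared (cap_nrm nn (sub K l))"
    and ii: "\<forall>v\<in>nrm nn K l. lab K v \<noteq> None \<longrightarrow> closed_tg (sub K v)"
    and iii: "card ({v\<in>nrm nn K l. lab K v = None} \<union> (\<Union>v\<in>safe nn K l. nodes (fst (sub K v)))) \<le> d"
    and iv: "card (nodes (fst (sub K r))) \<le> card (nodes (fst (sub K l)))
         + card (\<Union>v\<in>nrm nn K r. nodes (fst (sub K v)))"
    and finT: "finite T0"
  shows "card (reach K r) \<le> 1 + 2 * card T0 + 2 * d"
proof -
  define UV where "UV = {v\<in>nrm nn K l. lab K v = None}"
  define SV where "SV = (\<Union>v\<in>safe nn K l. reach K v)"
  define LN where "LN = {v\<in>nrm nn K l. lab K v \<noteq> None}"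
  define LNP where "LNP = (\<Union>v\<in>LN. reach K v)"
  have iii': "card (UV \<union> SV) \<le> d" using iii by (simp add: UV_def SV_def)
  have attl: "set (att K l) = nrm nn K l \<union> safe nn K l" using att_nrm_safe[of K l nn] labl by simp
  have chl: "u \<in> set (att K l) \<Longrightarrow> u \<in> reach K l \<and> u \<in> nodes K" for u
    using reach_child[OF lK] reachK_nodes by blast
  have NPKsub: "NPK \<subseteq> LNP \<union> UV"
  proof
    fix x assume "x \<in> NPK"
    then obtain w where w: "w \<in> nrm nn K l" "x \<in> reach K w" by (auto simp: NPK_def)
    show "x \<in> LNP \<union> UV"
    proof (cases "lab K w = None")
      case True
      have "w \<in> nodes K" using chl w(1) attl by blast
      then have "x = w" using reach_leaf True w(2) by blast
      then show ?thesis using w(1) True by (simp add: UV_def)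
    next
      case False then show ?thesis using w by (auto simp: LNP_def LN_def)
    qed
  qed
  have finnodes: "finite A" if "A \<subseteq> nodes K" for A using finite_subset[OF that finK] .
  have LNPnodes: "LNP \<subseteq> nodes K" using chl attl reach_subset_nodes[OF closK] by (auto simp: LNP_def LN_def)
  have UVnodes: "UV \<subseteq> nodes K" using chl attl by (auto simp: UV_def)
  have SVnodes: "SV \<subseteq> nodes K" using chl attl reach_subset_nodes[OF closK] by (auto simp: SV_def)
  have a: "reach K l \<subseteq> insert l (LNP \<union> (UV \<union> SV))"
  proof
    fix x assume "x \<in> reach K l"
    then have "x = l \<or> (\<exists>u\<in>set (att K l). x \<in> reach K u)" using reach_unfold[OF lK] by blast
    then show "x \<in> insert l (LNP \<union> (UV \<union> SV))"
    proof
      assume "\<exists>u\<in>set (att K l). x \<in> reach K u"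
      then obtain u where u: "u \<in> set (att K l)" "x \<in> reach K u" by blast
      have "u \<in> nrm nn K l \<or> u \<in> safe nn K l" using u(1) attl by blast
      then show ?thesis
      proof
        assume un: "u \<in> nrm nn K l"
        then have "x \<in> NPK" using u(2) by (auto simp: NPK_def)
        then show ?thesis using NPKsub by blast
      next
        assume "u \<in> safe nn K l" then show ?thesis using u(2) by (auto simp: SV_def)
      qed
    qed simp
  qed
  have b: "(\<Union>v\<in>nrm nn K r. reach K v) \<subseteq> LNP \<union> UV"
  proof
    fix x assume "x \<in> (\<Union>v\<in>nrm nn K r. reach K v)"
    then obtain v where v: "v \<in> nrm nn K r" "x \<in> reach K v" by blast
    have "v \<in> NPK" using rhs_nrm[OF reach_refl] v(1) by blast
    then obtain w where w: "w \<in> nrm nn K l" "v \<in> reach K w" by (auto simp: NPK_def)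
    have "x \<in> NPK" using w reach_trans[OF w(2) v(2)] by (auto simp: NPK_def)
    then show "x \<in> LNP \<union> UV" using NPKsub by blast
  qed
  define tm where "tm x = (SOME t. repr K x t)" for x
  have tm: "repr K x (tm x)" if "x \<in> nodes K" for x
    unfolding tm_def using repr_exists[OF finK closK acycK that] by (rule someI_ex)
  have LNPl: "x \<in> reach K l \<and> x \<noteq> l" if xL: "x \<in> LNP" for x
  proof -
    obtain v where v: "v \<in> LN" "x \<in> reach K v" using xL by (auto simp: LNP_def)
    then have "x \<in> NPK" by (auto simp: NPK_def LN_def)
    then show ?thesis using NPK_sub by blast
  qed
  have cap: "x \<in> nodes (fst (cap_nrm nn (sub K l))) \<and> lab (fst (cap_nrm nn (sub K l))) x = lab K x
      \<and> att (fst (cap_nrm nn (sub K l))) x = att K x" if x: "x \<in> LNP" for x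
  proof -
    obtain v where v: "v \<in> LN" "x \<in> reach K v" using x by (auto simp: LNP_def)
    have xl: "x \<in> reach K l" "x \<noteq> l" using LNPl[OF x] by auto
    have vr: "v \<in> reach K l" using v(1) chl attl by (auto simp: LN_def)
    have rv: "reach (fst (sub K l)) v = reach K v" using reach_sub[OF closK lK vr] .
    have vt: "v \<in> set (take (nn f) (att K l))" using v(1) labl by (simp add: LN_def nrm_def)
    have fin: "finite (reach K l)" using finnodes reach_subset_nodes[OF closK lK] by blast
    have big: "x < Suc (Max (reach K l)) + i" for i using Max_ge[OF fin xl(1)] by simp
    show ?thesis
      unfolding cap_nrm_def Let_def
      using xl v(2) vt rv big labl
      by (auto simp: less_not_refl2 intro: bexI[of _ v])
  qed
  have LNPcl: "set (att K z) \<subseteq> LNP" if zL: "z \<in> LNP" for z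
  proof -
    obtain v where v: "v \<in> LN" "z \<in> reach K v" using zL by (auto simp: LNP_def)
    have "z \<in> nodes K" using LNPnodes zL by blast
    then show ?thesis using reach_step[OF v(2)] v(1) by (auto simp: LNP_def)
  qed
  have inj: "inj_on tm LNP"
  proof (rule inj_onI)
    fix x y assume x: "x \<in> LNP" and y: "y \<in> LNP" and e: "tm x = tm y"
    have ag: "\<forall>z\<in>LNP. lab (fst (cap_nrm nn (sub K l))) z = lab K z \<and> att (fst (cap_nrm nn (sub K l))) z = att K z
        \<and> set (att K z) \<subseteq> LNP" using cap LNPcl by blast
    have "repr (fst (cap_nrm nn (sub K l))) x (tm x)"
      using repr_transfer[OF tm[OF subsetD[OF LNPnodes x]] x ag] .
    moreover have "repr (fst (cap_nrm nn (sub K l))) y (tm x)"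
      using repr_transfer[OF tm[OF subsetD[OF LNPnodes y]] y ag] e by simp
    ultimately show "x = y" using i cap[OF x] cap[OF y] by (auto simp: max_shared_def)
  qed
  have img: "tm ` LNP \<subseteq> T0"
  proof
    fix t assume "t \<in> tm ` LNP"
    then obtain x where x: "x \<in> LNP" and t: "t = tm x" by blast
    obtain v where v: "v \<in> LN" "x \<in> reach K v" using x by (auto simp: LNP_def)
    have vr: "v \<in> reach K l" using v(1) chl attl by (auto simp: LN_def)
    have vn: "v \<in> nrm nn K l" "lab K v \<noteq> None" using v(1) by (auto simp: LN_def)
    have cl: "\<forall>z\<in>reach K v. lab K z \<noteq> None" using ii vn by (auto simp: closed_tg_def)
    have mo: "morph (reach K v) \<phi> K Gg"
      unfolding morph_def
    proof
      fix z assume z: "z \<in> reach K v"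
      have zl: "z \<in> reach K l" using reach_trans[OF vr z] .
      have zn: "z \<in> nodes K" using reachK_nodes[OF zl] .
      show "z \<in> nodes K \<and> \<phi> z \<in> nodes Gg \<and> lab K z = lab Gg (\<phi> z) \<and> att Gg (\<phi> z) = map \<phi> (att K z)
          \<and> set (att K z) \<subseteq> reach K v"
        using zn homD[OF zl] cl z reach_step[OF z zn] by auto
    qed
    have "repr Gg (\<phi> x) t" using morph_repr[OF mo tm[OF subsetD[OF LNPnodes x]] v(2)] cl t by auto
    moreover have "\<phi> x \<in> reach Gg (\<phi> v)" using phi_reach[OF vr v(2)] .
    moreover have "\<phi> v \<in> nrm nn Gg (\<phi> l)" using nrm_phil vn(1) by blast
    ultimately show "t \<in> T0" using tinvG phil_G unfolding TINV_def by blast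
  qed
  have c: "card LNP \<le> card T0" using card_inj_on_le[OF inj img finT] .
  have "card (reach K l) \<le> card (insert l (LNP \<union> (UV \<union> SV)))"
    using a finnodes LNPnodes UVnodes SVnodes by (intro card_mono) auto
  also have "\<dots> \<le> Suc (card (LNP \<union> (UV \<union> SV)))"
  proof -
    have "finite (LNP \<union> (UV \<union> SV))" using finnodes LNPnodes UVnodes SVnodes by blast
    then show ?thesis by (simp add: card_insert_if)
  qed
  also have "\<dots> \<le> Suc (card LNP + card (UV \<union> SV))" using card_Un_le by simp
  finally have cl: "card (reach K l) \<le> 1 + card T0 + d" using c iii' by simp
  have "card (\<Union>v\<in>nrm nn K r. reach K v) \<le> card (LNP \<union> UV)"
    using b finnodes LNPnodes UVnodes by (intro card_mono) auto
  also have "\<dots> \<le> card LNP + card UV" by (rule card_Un_le)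
  also have "card UV \<le> card (UV \<union> SV)" using finnodes UVnodes SVnodes by (intro card_mono) auto
  finally have cr: "card (\<Union>v\<in>nrm nn K r. reach K v) \<le> card T0 + d" using c iii' by simp
  show ?thesis using iv cl cr by simp
qed

end


lemma inv_step:
  assumes constr: "\<forall>R\<in>Gs. constructor_rule ar Cs R" and sep: "separation ar Cs nn"
    and prec: "precedence Cs prec rk" and PT: "\<forall>(K, l, r)\<in>Gs. pt nn prec (sub K r) (sub K l)"
    and st: "rstep ar Gs X Y" and nac: "NAC Cs nn (fst X)" and tinv: "TINV T0 nn (fst X)"
  shows "NAC Cs nn (fst Y) \<and> TINV T0 nn (fst Y)"
proof -
  obtain Gg \<rho> where X: "X = (Gg, \<rho>)" by (cases X)
  from st obtain K l r \<phi> c where tg: "is_tg ar X" and R: "(K, l, r) \<in> Gs" and h: "hom (sub K l) (fst X) \<phi>"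
    and ic: "inj_on c (labeled_nodes (sub K r))" and fr: "c ` labeled_nodes (sub K r) \<inter> nodes (fst X) = {}"
    and Y: "Y = rewrite_result X K l r \<phi> c" unfolding rstep_def by blast
  interpret S: step_inv ar Cs nn prec rk K l r Gg \<rho> \<phi> c T0
    using tg R h ic fr constr sep prec PT nac tinv X by unfold_locales auto
  have "Y = sub S.G2 (S.red \<rho>)" using Y X S.rewrite_eq by simp
  then show ?thesis using S.nac_H S.tinv_H by simp
qed

theorem mainTheorem5:
  fixes ar :: "'f::finite \<Rightarrow> nat" and Cs :: "'f set" and nn :: "'f \<Rightarrow> nat"
    and prec :: "'f \<Rightarrow> 'f \<Rightarrow> bool" and rk :: "'f \<Rightarrow> nat"
    and Gs :: "'f rule set" and d :: nat and ell :: nat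
    and G0 G H :: "'f tg"
  assumes constr: "\<forall>R\<in>Gs. constructor_rule ar Cs R"
    and sep: "separation ar Cs nn"
    and prec: "precedence Cs prec rk"
    and PT: "\<forall>(K, l, r)\<in>Gs. pt nn prec (sub K r) (sub K l)"
    and d_ar: "\<forall>f. ar f \<le> d"
    and d_fin: "\<forall>(K, l, r)\<in>G_fin Cs Gs. card (nodes (fst (sub K r))) \<le> d"
    and inf_i: "\<forall>(K, l, r)\<in>G_inf Cs Gs. max_shared (cap_nrm nn (sub K l))"
    and inf_ii: "\<forall>(K, l, r)\<in>G_inf Cs Gs. \<forall>v\<in>nrm nn K l. lab K v \<noteq> None \<longrightarrow> closed_tg (sub K v)"
    and inf_iii: "\<forall>(K, l, r)\<in>G_inf Cs Gs.
       card ({v\<in>nrm nn K l. lab K v = None} \<union> (\<Union>v\<in>safe nn K l. nodes (fst (sub K v)))) \<le> d"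
    and inf_iv: "\<forall>(K, l, r)\<in>G_inf Cs Gs.
       card (nodes (fst (sub K r))) \<le> card (nodes (fst (sub K l)))
         + card (\<Union>v\<in>nrm nn K r. nodes (fst (sub K v)))"
    and G0: "is_tg ar G0" "closed_tg G0" "basic_tg Cs G0"
    and steps: "(rstep ar Gs)\<^sup>*\<^sup>* G0 G" "rstep ar Gs G H"
    and ell_pos: "0 < ell"
    and ell_bound: "2 * (card (\<Union>v\<in>nrm nn (fst G0) (snd G0). nodes (fst (sub (fst G0) v))) + d) \<le> ell"
  shows "pi Cs rk nn ell H < pi Cs rk nn ell G"
proof -
  obtain Gg0 \<rho>0 where G0e: "G0 = (Gg0, \<rho>0)" by (cases G0)
  define NP0 where "NP0 = (\<Union>v\<in>nrm nn Gg0 \<rho>0. reach Gg0 v)"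
  define T0 where "T0 = {t. \<exists>x\<in>NP0. repr Gg0 x t}"
  have wf0: "wf_lg ar Gg0" and r0: "\<rho>0 \<in> nodes Gg0" and eq0: "nodes Gg0 = reach Gg0 \<rho>0"
    using G0(1) G0e by (auto simp: is_tg_def)
  have cl0: "clos Gg0" using wf_clos[OF wf0] .
  have fin0: "finite (nodes Gg0)" using wf0 by (simp add: wf_lg_def)
  have args0: "\<forall>v\<in>set (att Gg0 \<rho>0). constr_tg Cs (sub Gg0 v)" using G0(3) G0e by (simp add: basic_tg_def)
  have other0: "nrm nn Gg0 v = {}" if v: "v \<in> nodes Gg0" "v \<noteq> \<rho>0" for v
  proof -
    obtain u where u: "u \<in> set (att Gg0 \<rho>0)" "v \<in> reach Gg0 u"
      using v reach_unfold[OF r0] eq0 by blast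
    have "\<forall>g. lab Gg0 v = Some g \<longrightarrow> g \<in> Cs" using args0 u unfolding constr_sub_iff by blast
    then show ?thesis using sep by (auto simp: nrm_def separation_def split: option.splits)
  qed
  have NP0nodes: "NP0 \<subseteq> nodes Gg0"
    using reach_subset_nodes[OF cl0] nrm_att[of nn Gg0 \<rho>0] cl0 r0 unfolding NP0_def clos_def by blast
  have finNP0: "finite NP0" using finite_subset[OF NP0nodes fin0] .
  have T0img: "T0 \<subseteq> (\<lambda>x. THE t. repr Gg0 x t) ` NP0"
  proof
    fix t assume "t \<in> T0"
    then obtain x where x: "x \<in> NP0" "repr Gg0 x t" by (auto simp: T0_def)
    then have "(THE t. repr Gg0 x t) = t" using repr_unique by (intro the_equality) auto
    then show "t \<in> (\<lambda>x. THE t. repr Gg0 x t) ` NP0" using x(1) by (metis imageI)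
  qed
  have finT0: "finite T0" using finite_subset[OF T0img] finNP0 by blast
  have cardT0: "card T0 \<le> card NP0"
    using card_mono[OF _ T0img] card_image_le[OF finNP0] finNP0 by (meson finite_imageI order_trans)
  have nac0: "NAC Cs nn Gg0"
    unfolding NAC_def
  proof (intro ballI)
    fix v w assume v: "v \<in> nodes Gg0" and w: "w \<in> nrm nn Gg0 v"
    then have "v = \<rho>0" using other0 by blast
    then show "constr_tg Cs (sub Gg0 w)" using args0 w nrm_att by blast
  qed
  have tinv0: "TINV T0 nn Gg0"
    unfolding TINV_def
  proof (intro ballI allI impI)
    fix v w x t assume v: "v \<in> nodes Gg0" and w: "w \<in> nrm nn Gg0 v" and x: "x \<in> reach Gg0 w"
      and t: "repr Gg0 x t"
    then have "v = \<rho>0" using other0 by blast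
    then have "x \<in> NP0" using w x by (auto simp: NP0_def)
    then show "t \<in> T0" using t by (auto simp: T0_def)
  qed
  have invG: "NAC Cs nn (fst G) \<and> TINV T0 nn (fst G)"
    using steps(1)
  proof (induct rule: rtranclp_induct)
    case base then show ?case using nac0 tinv0 G0e by simp
  next
    case (step Y Z)
    then show ?case using inv_step[OF constr sep prec PT] by blast
  qed
  obtain Gg \<rho> where Ge: "G = (Gg, \<rho>)" by (cases G)
  from steps(2) obtain K l r \<phi> c where tg: "is_tg ar G" and R: "(K, l, r) \<in> Gs" and h: "hom (sub K l) (fst G) \<phi>"
    and ic: "inj_on c (labeled_nodes (sub K r))" and fr: "c ` labeled_nodes (sub K r) \<inter> nodes (fst G) = {}"
    and Hd: "H = rewrite_result G K l r \<phi> c" unfolding rstep_def by blast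
  interpret S: step_inv ar Cs nn prec rk K l r Gg \<rho> \<phi> c T0
    using tg R h ic fr constr sep prec PT invG Ge by unfold_locales auto
  have ellb: "2 * (card NP0 + d) \<le> ell" using ell_bound G0e by (simp add: NP0_def)
  have dell: "d \<le> ell" using ellb by simp
  have cardr: "card (reach K r) \<le> 1 + ell"
  proof (cases "S.f \<in> D_inf Cs Gs")
    case True
    then have KR: "(K, l, r) \<in> G_inf Cs Gs" using R S.labl by (simp add: G_inf_def)
    have "card (reach K r) \<le> 1 + 2 * card T0 + 2 * d"
    proof (rule S.inf_bound)
      show "max_shared (cap_nrm nn (sub K l))" using inf_i KR by fastforce
      show "\<forall>v\<in>nrm nn K l. lab K v \<noteq> None \<longrightarrow> closed_tg (sub K v)" using inf_ii KR by fastforce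
      show "card ({v\<in>nrm nn K l. lab K v = None} \<union> (\<Union>v\<in>safe nn K l. nodes (fst (sub K v)))) \<le> d"
        using inf_iii KR by fastforce
      show "card (nodes (fst (sub K r))) \<le> card (nodes (fst (sub K l)))
         + card (\<Union>v\<in>nrm nn K r. nodes (fst (sub K v)))" using inf_iv KR by fastforce
      show "finite T0" using finT0 .
    qed
    then show ?thesis using cardT0 ellb by simp
  next
    case False
    then have KR: "(K, l, r) \<in> G_fin Cs Gs" using R S.labl S.fD by (simp add: G_fin_def)
    have "card (nodes (fst (sub K r))) \<le> d" using d_fin KR by fastforce
    then show ?thesis using dell by simp
  qed
  have "H = sub S.G2 (S.red \<rho>)" using Hd Ge S.rewrite_eq by simp
  then show ?thesis using S.decrease[OF ell_pos d_ar dell cardr] Ge by simp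
qed

end
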